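(* Let $\mathcal L(\lambda)=L_0+\lambda L_1+\cdots+\lambda^pL_p$ be a selfadjoint matrix pencil of odd degree $p=2\ell+1$ acting on $X=\mathbb{C}^N$, and suppose that $L_p$ is invertible. Then \[ N-2N_-(L_0)-Z^\downarrow_+(\mathcal L)-Z^\downarrow_-(\mathcal L)+\sum_{\lambda\in\sigma(\mathcal L),\,\lambda>0}\kappa(\lambda)-\sum_{\lambda\in\sigma(\mathcal L),\,\lambda<0}\kappa(\lambda)=0, \] and moreover \[ N_\pm(\mathcal L)\ \ge\ \bigl|N_-(L_0)+Z^\downarrow_\pm(\mathcal L)-N_\mp(L_p)\bigr|. \]
   Context: The pencil is selfadjoint: every $L_j$ is an $N\times N$ Hermitian matrix. Its characteristic values are the $\lambda\in\mathbb{C}$ with $\det\mathcal L(\lambda)=0$, and $\sigma(\mathcal L)$ is the set of them. For real $\lambda$, the $N$ eigenvalues of the Hermitian matrix $\mathcal L(\lambda)$ can be chosen as $N$ real analytic functions $\mu=\mu(\lambda)$ of $\lambda\in\mathbb{R}$ (eigenvalue branches, counted with multiplicity). For a Hermitian matrix $A$, $N_+(A)$ (resp. $N_-(A)$) is the number of strictly positive (resp. negative) eigenvalues counted with multiplicity. For the pencil, $N_+(\mathcal L)$ (resp. $N_-(\mathcal L)$) is the number of strictly positive (resp. negative) real characteristic values counted with geometric multiplicity $\dim\ker\mathcal L(\lambda)$. $Z^\downarrow_+(\mathcal L)$ (resp. $Z^\downarrow_-(\mathcal L)$) is the number of eigenvalue branches with $\mu(0)=0$ and $\mu(\lambda)<0$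 for all sufficiently small $\lambda>0$ (resp. $\lambda<0$). Krein signature (graphical): if $\lambda_0\in\mathbb{R}$ is a characteristic value and $\mu$ is a branch with $\mu^{(n)}(\lambda_0)=0$ for $n<m$ and $\mu^{(m)}(\lambda_0)\ne0$, set $\eta=\operatorname{sign}\mu^{(m)}(\lambda_0)$ and $\kappa^\pm(\mu,\lambda_0)=m/2$ if $m$ is even, $\kappa^\pm(\mu,\lambda_0)=(m\pm\eta)/2$ if $m$ is odd. Then $\kappa^\pm(\lambda_0)$ is the sum of $\kappa^\pm(\mu,\lambda_0)$ over all branches vanishing at $\lambda_0$, and $\kappa(\lambda_0)=\kappa^+(\lambda_0)-\kappa^-(\lambda_0)$. The sums in the identity run over real characteristic values only. *)

theory Defs
  imports "HOL-Analysis.Analysis" "Jordan_Normal_Form.Jordan_Normal_Form" "Jordan_Normal_Form.Matrix_Kernel"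
begin

definition hermitian_mat :: "nat \<Rightarrow> complex mat \<Rightarrow> bool" where
  "hermitian_mat N A \<longleftrightarrow> A \<in> carrier_mat N N \<and>
     (\<forall>i<N. \<forall>j<N. A $$ (i,j) = cnj (A $$ (j,i)))"

definition pencil :: "nat \<Rightarrow> nat \<Rightarrow> (nat \<Rightarrow> complex mat) \<Rightarrow> complex \<Rightarrow> complex mat" where
  "pencil N p L z = mat N N (\<lambda>(r,c). \<Sum>j\<le>p. z ^ j * L j $$ (r,c))"

definition Npos_mat :: "complex mat \<Rightarrow> nat" where
  "Npos_mat A = (\<Sum>x\<in>{x::real. 0 < x \<and> poly (char_poly A) (complex_of_real x) = 0}.
                   Polynomial.order (complex_of_real x) (char_poly A))"

definition Nneg_mat :: "complex mat \<Rightarrow> nat" where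
  "Nneg_mat A = (\<Sum>x\<in>{x::real. x < 0 \<and> poly (char_poly A) (complex_of_real x) = 0}.
                   Polynomial.order (complex_of_real x) (char_poly A))"

definition real_char_values :: "nat \<Rightarrow> nat \<Rightarrow> (nat \<Rightarrow> complex mat) \<Rightarrow> real set" where
  "real_char_values N p L = {x::real. det (pencil N p L (complex_of_real x)) = 0}"

definition Npos_pencil :: "nat \<Rightarrow> nat \<Rightarrow> (nat \<Rightarrow> complex mat) \<Rightarrow> nat" where
  "Npos_pencil N p L = (\<Sum>x\<in>{x\<in>real_char_values N p L. 0 < x}.
                          kernel_dim (pencil N p L (complex_of_real x)))"

definition Nneg_pencil :: "nat \<Rightarrow> nat \<Rightarrow> (nat \<Rightarrow> complex mat) \<Rightarrow> nat" where
  "Nneg_pencil N p L = (\<Sum>x\<in>{x\<in>real_char_values N p L. x < 0}.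
                          kernel_dim (pencil N p L (complex_of_real x)))"

definition real_analytic :: "(real \<Rightarrow> real) \<Rightarrow> bool" where
  "real_analytic f \<longleftrightarrow> (\<forall>x. \<exists>r>0. \<exists>a::nat \<Rightarrow> real.
       \<forall>y. \<bar>y - x\<bar> < r \<longrightarrow> (\<lambda>n. a n * (y - x) ^ n) sums f y)"

text \<open>mu :: nat => real => real, indexed by i < N, is a family of eigenvalue branches
  of the pencil: N real analytic functions whose values at each real lambda are exactly the
  eigenvalues of the Hermitian matrix L(lambda), counted with multiplicity.\<close>
definition eigen_branches :: "nat \<Rightarrow> nat \<Rightarrow> (nat \<Rightarrow> complex mat) \<Rightarrow> (nat \<Rightarrow> real \<Rightarrow> real) \<Rightarrow> bool" where
  "eigen_branches N p L mu \<longleftrightarrow>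
     (\<forall>i<N. real_analytic (mu i)) \<and>
     (\<forall>x t. count (mset (map (\<lambda>i. mu i x) [0..<N])) t =
              Polynomial.order (complex_of_real t) (char_poly (pencil N p L (complex_of_real x))))"

definition Zdown_pos :: "nat \<Rightarrow> (nat \<Rightarrow> real \<Rightarrow> real) \<Rightarrow> nat" where
  "Zdown_pos N mu = card {i. i < N \<and> mu i 0 = 0 \<and> (\<forall>\<^sub>F x in at_right 0. mu i x < 0)}"

definition Zdown_neg :: "nat \<Rightarrow> (nat \<Rightarrow> real \<Rightarrow> real) \<Rightarrow> nat" where
  "Zdown_neg N mu = card {i. i < N \<and> mu i 0 = 0 \<and> (\<forall>\<^sub>F x in at_left 0. mu i x < 0)}"

definition vanish_order :: "(real \<Rightarrow> real) \<Rightarrow> real \<Rightarrow> nat" where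
  "vanish_order f x0 = (LEAST m. (deriv ^^ m) f x0 \<noteq> 0)"

definition vanish_sign :: "(real \<Rightarrow> real) \<Rightarrow> real \<Rightarrow> int" where
  "vanish_sign f x0 = (if 0 < (deriv ^^ vanish_order f x0) f x0 then 1 else -1)"

definition kappa_plus_branch :: "(real \<Rightarrow> real) \<Rightarrow> real \<Rightarrow> int" where
  "kappa_plus_branch f x0 = (let m = int (vanish_order f x0) in
     if even m then m div 2 else (m + vanish_sign f x0) div 2)"

definition kappa_minus_branch :: "(real \<Rightarrow> real) \<Rightarrow> real \<Rightarrow> int" where
  "kappa_minus_branch f x0 = (let m = int (vanish_order f x0) in
     if even m then m div 2 else (m - vanish_sign f x0) div 2)"

definition kappa_plus :: "nat \<Rightarrow> (nat \<Rightarrow> real \<Rightarrow> real) \<Rightarrow> real \<Rightarrow> int" where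
  "kappa_plus N mu x0 = (\<Sum>i\<in>{i. i < N \<and> mu i x0 = 0}. kappa_plus_branch (mu i) x0)"

definition kappa_minus :: "nat \<Rightarrow> (nat \<Rightarrow> real \<Rightarrow> real) \<Rightarrow> real \<Rightarrow> int" where
  "kappa_minus N mu x0 = (\<Sum>i\<in>{i. i < N \<and> mu i x0 = 0}. kappa_minus_branch (mu i) x0)"

definition kappa :: "nat \<Rightarrow> (nat \<Rightarrow> real \<Rightarrow> real) \<Rightarrow> real \<Rightarrow> int" where
  "kappa N mu x0 = kappa_plus N mu x0 - kappa_minus N mu x0"

end

theory Submission
  imports Defs "Jordan_Normal_Form.Jordan_Normal_Form_Existence" "Jordan_Normal_Form.Jordan_Normal_Form_Uniqueness"
begin


lemma kernel_dim_cong: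
  assumes "dim_col A = dim_col B" "mat_kernel A = mat_kernel B"
  shows "kernel_dim A = kernel_dim B"
  unfolding kernel_dim_def using assms by simp

lemma herm_adj:
  fixes A :: "complex mat"
  assumes A: "A \<in> carrier_mat n n" and h: "\<forall>i<n. \<forall>j<n. A $$ (i,j) = cnj (A $$ (j,i))"
    and v: "v \<in> carrier_vec n" and w: "w \<in> carrier_vec n"
  shows "(A *\<^sub>v v) \<bullet>c w = v \<bullet>c (A *\<^sub>v w)"
proof -
  have "(A *\<^sub>v v) \<bullet>c w = (\<Sum>i<n. (\<Sum>j<n. A $$ (i,j) * v $ j) * cnj (w $ i))"
    using A v w by (simp add: scalar_prod_def mult_mat_vec_def row_def atLeast0LessThan)
  also have "\<dots> = (\<Sum>i<n. \<Sum>j<n. A $$ (i,j) * v $ j * cnj (w $ i))"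
    by (simp add: sum_distrib_right)
  also have "\<dots> = (\<Sum>j<n. \<Sum>i<n. A $$ (i,j) * v $ j * cnj (w $ i))"
    by (rule sum.swap)
  also have "\<dots> = (\<Sum>j<n. v $ j * cnj (\<Sum>i<n. A $$ (j,i) * w $ i))"
  proof (rule sum.cong[OF refl])
    fix j assume j: "j \<in> {..<n}"
    have "v $ j * cnj (\<Sum>i<n. A $$ (j,i) * w $ i) = (\<Sum>i<n. v $ j * (cnj (A $$ (j,i)) * cnj (w $ i)))"
      by (simp add: sum_distrib_left)
    also have "\<dots> = (\<Sum>i<n. A $$ (i,j) * v $ j * cnj (w $ i))"
    proof (intro sum.cong refl)
      fix i assume i: "i \<in> {..<n}"
      have "cnj (A $$ (j,i)) = A $$ (i,j)" using h[rule_format, of i j] i j by simp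
      thus "v $ j * (cnj (A $$ (j,i)) * cnj (w $ i)) = A $$ (i,j) * v $ j * cnj (w $ i)" by simp
    qed
    finally show "(\<Sum>i<n. A $$ (i,j) * v $ j * cnj (w $ i)) = v $ j * cnj (\<Sum>i<n. A $$ (j,i) * w $ i)" by simp
  qed
  also have "\<dots> = v \<bullet>c (A *\<^sub>v w)"
    using A v w by (simp add: scalar_prod_def mult_mat_vec_def row_def atLeast0LessThan)
  finally show ?thesis .
qed

lemma herm_kernel_sq:
  fixes A :: "complex mat"
  assumes A: "A \<in> carrier_mat n n" and h: "\<forall>i<n. \<forall>j<n. A $$ (i,j) = cnj (A $$ (j,i))"
  shows "mat_kernel (A * A) = mat_kernel A"
proof
  show "mat_kernel A \<subseteq> mat_kernel (A * A)" by (rule mat_kernel_mult_subset[OF A A])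
  show "mat_kernel (A * A) \<subseteq> mat_kernel A"
  proof
    fix v assume "v \<in> mat_kernel (A * A)"
    hence v: "v \<in> carrier_vec n" and z: "(A * A) *\<^sub>v v = 0\<^sub>v n"
      using A by (auto simp: mat_kernel_def)
    define w where "w = A *\<^sub>v v"
    have w: "w \<in> carrier_vec n" using A v w_def by auto
    have "A *\<^sub>v w = 0\<^sub>v n" using z A v unfolding w_def by (simp add: assoc_mult_mat_vec)
    hence "v \<bullet>c (A *\<^sub>v w) = 0" using v by simp
    hence "w \<bullet>c w = 0" using herm_adj[OF A h v w] w_def by simp
    hence "w = 0\<^sub>v n" using w by simp
    thus "v \<in> mat_kernel A" using v A w_def by (auto simp: mat_kernel_def)
  qed
qed

lemma sum_list_min_eq:
  fixes xs :: "nat list"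
  assumes "sum_list (map (min 2) xs) = sum_list (map (min 1) xs)"
  shows "\<forall>x\<in>set xs. x \<le> 1"
  using assms
proof (induct xs)
  case (Cons a xs)
  have "sum_list (map (min 1) xs) \<le> sum_list (map (min 2) xs)"
    by (rule sum_list_mono) auto
  with Cons.prems have "min 2 a \<le> min 1 a" by simp
  hence a: "a \<le> 1" by simp
  with Cons.prems have "sum_list (map (min 2) xs) = sum_list (map (min 1) xs)" by simp
  with Cons.hyps a show ?case by simp
qed simp

lemma herm_order_le_kernel:
  fixes A :: "complex mat"
  assumes A: "A \<in> carrier_mat n n" and h: "\<forall>i<n. \<forall>j<n. A $$ (i,j) = cnj (A $$ (j,i))"
  shows "Polynomial.order 0 (char_poly A) \<le> kernel_dim A"
proof -
  obtain as where "char_poly A = (\<Prod> a \<leftarrow> as. [:- a, 1:])"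
    using char_poly_factorized[OF A] by blast
  from jordan_nf_exists[OF A this] obtain n_as where jnf: "jordan_nf A n_as" by blast
  let ?l = "map fst [(n, e)\<leftarrow>n_as . e = 0]"
  have cm: "char_matrix A 0 = A" using A unfolding char_matrix_def by auto
  have d1: "dim_gen_eigenspace A 0 1 = kernel_dim A"
    unfolding dim_gen_eigenspace_def cm using A by (simp add: numeral_2_eq_2)
  have d2: "dim_gen_eigenspace A 0 (2::nat) = kernel_dim (A * A)"
    unfolding dim_gen_eigenspace_def cm using A by (simp add: numeral_2_eq_2)
  have "kernel_dim (A * A) = kernel_dim A"
    by (rule kernel_dim_cong, insert A herm_kernel_sq[OF A h], auto)
  hence "sum_list (map (min 2) ?l) = sum_list (map (min 1) ?l)"
    using dim_gen_eigenspace[OF jnf, of 0 "2::nat"] dim_gen_eigenspace[OF jnf, of 0 1] d1 d2 by simp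
  from sum_list_min_eq[OF this] have le1: "\<forall>x\<in>set ?l. x \<le> 1" .
  have "sum_list ?l = sum_list (map (min 1) ?l)" using le1 by (induct n_as) (auto split: if_splits)
  also have "\<dots> = kernel_dim A"
    using dim_gen_eigenspace[OF jnf, of 0 1] d1 by simp
  finally have "sum_list ?l = kernel_dim A" .
  moreover have "Polynomial.order 0 (char_poly A) = sum_list ?l"
    unfolding jordan_nf_order[OF jnf]
    by (induct n_as) auto
  ultimately show ?thesis by simp
qed


lemma powser_loc_deriv:
  fixes a :: "nat \<Rightarrow> real" and F :: "real \<Rightarrow> real"
  assumes r: "r > 0" and S: "\<forall>y. \<bar>y - x\<bar> < r \<longrightarrow> (\<lambda>n. a n * (y - x) ^ n) sums F y"
  shows "\<forall>y. \<bar>y - x\<bar> < r \<longrightarrow> (\<lambda>n. diffs a n * (y - x) ^ n) sums deriv F y \<and> DERIV F y :> deriv F y"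
proof (intro allI impI)
  fix y assume y: "\<bar>y - x\<bar> < r"
  have sm: "summable (\<lambda>n. a n * z ^ n)" if "norm z < r" for z :: real
  proof -
    from that have "\<bar>(x + z) - x\<bar> < r" by simp
    with S have "(\<lambda>n. a n * ((x+z) - x) ^ n) sums F (x+z)" by blast
    thus "summable (\<lambda>n. a n * z ^ n)" by (simp add: sums_iff)
  qed
  have D: "((\<lambda>z. \<Sum>n. a n * z^n) has_field_derivative (\<Sum>n. diffs a n * (y-x)^n)) (at (y - x))"
    by (rule termdiffs_strong'[OF sm]) (use y in auto)
  have Dg: "((\<lambda>y. y - x) has_field_derivative 1) (at y)"
    by (auto intro!: derivative_eq_intros)
  have D2: "((\<lambda>y. \<Sum>n. a n * (y-x)^n) has_field_derivative (\<Sum>n. diffs a n * (y-x)^n)) (at y)"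
    using DERIV_chain2[OF D Dg] by simp
  have D3: "(F has_field_derivative (\<Sum>n. diffs a n * (y-x)^n)) (at y)"
  proof (rule has_field_derivative_transform_within_open[OF D2, of "ball x r"])
    show "open (ball x r)" by simp
    show "y \<in> ball x r" using y by (simp add: dist_real_def abs_minus_commute)
    fix z assume "z \<in> ball x r"
    hence "\<bar>z - x\<bar> < r" by (simp add: dist_real_def abs_minus_commute)
    with S have "(\<lambda>n. a n * (z - x) ^ n) sums F z" by blast
    thus "(\<Sum>n. a n * (z-x)^n) = F z" by (simp add: sums_iff)
  qed
  hence dv: "deriv F y = (\<Sum>n. diffs a n * (y-x)^n)" by (rule DERIV_imp_deriv)
  have "summable (\<lambda>n. diffs a n * (y - x) ^ n)"
    by (rule termdiff_converges[of _ r]) (use y sm in auto)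
  thus "(\<lambda>n. diffs a n * (y - x) ^ n) sums deriv F y \<and> DERIV F y :> deriv F y"
    using D3 dv by (simp add: summable_sums)
qed

lemma powser_loc_iter:
  fixes a :: "nat \<Rightarrow> real" and F :: "real \<Rightarrow> real"
  assumes r: "r > 0" and S: "\<forall>y. \<bar>y - x\<bar> < r \<longrightarrow> (\<lambda>n. a n * (y - x) ^ n) sums F y"
  shows "\<forall>y. \<bar>y - x\<bar> < r \<longrightarrow> (\<lambda>n. (diffs^^m) a n * (y - x) ^ n) sums (deriv^^m) F y"
proof (induct m)
  case 0 then show ?case using S by simp
next
  case (Suc m)
  from powser_loc_deriv[OF r Suc] show ?case by simp
qed

lemma diffs_iter: "(diffs^^m) (a :: nat \<Rightarrow> real) n = (fact (n+m) / fact n) * a (n+m)"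
proof (induct m arbitrary: n)
  case 0 then show ?case by simp
next
  case (Suc m)
  have "(diffs^^Suc m) a n = of_nat (Suc n) * (diffs^^m) a (Suc n)" by (simp add: diffs_def)
  also have "\<dots> = of_nat (Suc n) * ((fact (Suc n + m) / fact (Suc n)) * a (Suc n + m))" using Suc by simp
  also have "\<dots> = (fact (n + Suc m) / fact n) * a (n + Suc m)"
    by (simp add: fact_Suc field_simps del: of_nat_Suc)
  finally show ?case .
qed

lemma powser_loc_deriv_at:
  fixes a :: "nat \<Rightarrow> real" and F :: "real \<Rightarrow> real"
  assumes r: "r > 0" and S: "\<forall>y. \<bar>y - x\<bar> < r \<longrightarrow> (\<lambda>n. a n * (y - x) ^ n) sums F y"
  shows "(deriv^^m) F x = fact m * a m"
proof -
  have "(\<lambda>n. (diffs^^m) a n * 0 ^ n) sums (deriv^^m) F x"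
    using powser_loc_iter[OF r S, of m, rule_format, of x] r by simp
  hence "(deriv^^m) F x = (\<Sum>n. (diffs^^m) a n * 0 ^ n)" by (rule sums_unique)
  hence "(deriv^^m) F x = (diffs^^m) a 0" by simp
  thus ?thesis by (simp add: diffs_iter)
qed

lemma real_analytic_isCont:
  assumes "real_analytic f" shows "isCont f x"
proof -
  from assms obtain r a where r: "r > 0" and S: "\<forall>y. \<bar>y - x\<bar> < r \<longrightarrow> (\<lambda>n. a n * (y - x) ^ n) sums f y"
    unfolding real_analytic_def by blast
  from powser_loc_deriv[OF r S] r have "DERIV f x :> deriv f x" by auto
  thus ?thesis by (rule DERIV_isCont)
qed

lemma real_analytic_cont: "real_analytic f \<Longrightarrow> continuous_on A f"
  by (simp add: continuous_at_imp_continuous_on real_analytic_isCont)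

lemma eventually_at_left_lt: "\<forall>\<^sub>F y in at_left (x::real). y < x"
  by (simp add: eventually_at_filter)

lemma eventually_at_right_gt: "\<forall>\<^sub>F y in at_right (x::real). x < y"
  by (simp add: eventually_at_filter)

lemma analytic_zero:
  fixes f :: "real \<Rightarrow> real" and x :: real
  assumes an: "real_analytic f" and fx: "f x = 0" and iso: "\<forall>\<^sub>F y in at x. f y \<noteq> 0"
  shows "((\<forall>\<^sub>F y in at_right x. f y > 0) \<or> (\<forall>\<^sub>F y in at_right x. f y < 0))
       \<and> ((\<forall>\<^sub>F y in at_left x. f y > 0) \<or> (\<forall>\<^sub>F y in at_left x. f y < 0))
       \<and> kappa_plus_branch f x - kappa_minus_branch f x =
          (if \<forall>\<^sub>F y in at_right x. f y > 0 then 1 else 0) - (if \<forall>\<^sub>F y in at_left x. f y > 0 then 1 else 0)"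
proof -
  from an obtain r a where r: "r > 0" and S: "\<forall>y. \<bar>y - x\<bar> < r \<longrightarrow> (\<lambda>n. a n * (y - x) ^ n) sums f y"
    unfolding real_analytic_def by blast
  have ex: "\<exists>n. a n \<noteq> 0"
  proof (rule ccontr)
    assume "\<not> ?thesis"
    hence z: "\<forall>n. a n = 0" by simp
    have "\<forall>\<^sub>F y in at x. f y = 0"
      unfolding eventually_at
    proof (intro exI[of _ r] conjI ballI impI allI)
      fix y assume "y \<noteq> x \<and> dist y x < r"
      hence "\<bar>y - x\<bar> < r" by (simp add: dist_real_def)
      with S have "(\<lambda>n. a n * (y - x) ^ n) sums f y" by blast
      thus "f y = 0" using z by (simp add: sums_iff)
    qed (use r in auto)
    with iso have "\<forall>\<^sub>F y in at x. False" by (rule eventually_elim2) auto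
    thus False by simp
  qed
  define k where "k = (LEAST n. a n \<noteq> 0)"
  have ak: "a k \<noteq> 0" unfolding k_def using ex by (rule LeastI_ex)
  have below: "\<And>n. n < k \<Longrightarrow> a n = 0" unfolding k_def using not_less_Least by blast
  have "(\<lambda>n. a n * 0 ^ n) sums f x" using S[rule_format, of x] r by simp
  hence "f x = (\<Sum>n. a n * 0 ^ n)" by (rule sums_unique)
  hence a0: "a 0 = f x" by simp
  hence k1: "k \<ge> 1" using ak fx by (cases k) auto
  have vo: "vanish_order f x = k"
    unfolding vanish_order_def powser_loc_deriv_at[OF r S] k_def by simp
  have vs: "vanish_sign f x = (if a k > 0 then 1 else -1)"
    unfolding vanish_sign_def vo powser_loc_deriv_at[OF r S] by (simp add: zero_less_mult_iff)
  define g where "g y = (\<Sum>n. a (n+k) * (y - x) ^ n)" for y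
  have smg: "summable (\<lambda>n. a (n+k) * z ^ n) \<and> (z \<noteq> 0 \<longrightarrow> f (x + z) = z ^ k * (\<Sum>n. a (n+k) * z ^ n))"
    if z: "norm z < r" for z :: real
  proof -
    from z have "\<bar>(x + z) - x\<bar> < r" by simp
    hence s1: "(\<lambda>n. a n * z ^ n) sums f (x+z)" using S[rule_format, of "x+z"] by simp
    from sums_split_initial_segment[OF s1, of k]
    have s2: "(\<lambda>n. a (n + k) * z ^ (n + k)) sums f (x+z)" using below by simp
    show ?thesis
    proof (cases "z = 0")
      case True then show ?thesis by simp
    next
      case False
      have "(\<lambda>n. z ^ k * (a (n + k) * z ^ n)) sums f (x+z)"
        using s2 by (simp add: power_add mult_ac)
      hence "(\<lambda>n. z ^ k * (a (n + k) * z ^ n)) sums (z^k * (f (x+z) / z^k))" using False by simp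
      hence s3: "(\<lambda>n. a (n + k) * z ^ n) sums (f (x+z) / z^k)"
        using False by (subst (asm) sums_mult_iff) auto
      thus ?thesis using False by (simp add: sums_iff)
    qed
  qed
  have Dg: "((\<lambda>z. \<Sum>n. a (n+k) * z^n) has_field_derivative (\<Sum>n. diffs (\<lambda>n. a (n+k)) n * 0^n)) (at 0)"
    by (rule termdiffs_strong'[of r]) (use smg r in auto)
  have "isCont (\<lambda>z. \<Sum>n. a (n+k) * z^n) (x - x)" using DERIV_isCont[OF Dg] by simp
  hence cg: "isCont g x" unfolding g_def by (rule isCont_o2[rotated]) (auto intro!: continuous_intros)
  have gx: "g x = a k" unfolding g_def by simp
  have fg: "\<forall>\<^sub>F y in at x. f y = (y - x) ^ k * g y"
    unfolding eventually_at
  proof (intro exI[of _ r] conjI ballI impI allI)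
    fix y assume "y \<noteq> x \<and> dist y x < r"
    hence "norm (y - x) < r" "y - x \<noteq> 0" by (auto simp: dist_real_def)
    from smg[OF this(1)] this(2) show "f y = (y - x) ^ k * g y" unfolding g_def by simp
  qed (use r in auto)
  have gt: "(g \<longlongrightarrow> a k) (at x)" using cg gx by (simp add: isCont_def)
  have sg: "\<forall>\<^sub>F y in at x. sgn (g y) = sgn (a k)"
  proof (cases "a k > 0")
    case True
    from order_tendstoD(1)[OF gt True] show ?thesis by eventually_elim (use True in auto)
  next
    case False
    with ak have "a k < 0" by simp
    from order_tendstoD(2)[OF gt this] show ?thesis by eventually_elim (use \<open>a k < 0\<close> in auto)
  qed
  have ev: "\<forall>\<^sub>F y in at x. f y = (y - x) ^ k * g y \<and> sgn (g y) = sgn (a k)"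
    using fg sg by (rule eventually_conj)
  have R: "\<forall>\<^sub>F y in at_right x. sgn (f y) = sgn (a k)"
    using eventually_conj[OF ev[unfolded eventually_at_split, THEN conjunct2] eventually_at_right_gt]
    by eventually_elim (auto simp: sgn_mult)
  have L: "\<forall>\<^sub>F y in at_left x. sgn (f y) = (-1)^k * sgn (a k)"
    using eventually_conj[OF ev[unfolded eventually_at_split, THEN conjunct1] eventually_at_left_lt]
    by eventually_elim (auto simp: sgn_mult power_sgn)
  define s where "s = sgn (a k)"
  have s: "s = 1 \<or> s = -1" using ak unfolding s_def by (auto simp: sgn_real_def)
  have posR: "(\<forall>\<^sub>F y in at_right x. f y > 0) \<longleftrightarrow> s = 1"
  proof
    assume "\<forall>\<^sub>F y in at_right x. f y > 0"
    with R have "\<forall>\<^sub>F y in at_right x. s = 1" unfolding s_def by eventually_elim auto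
    thus "s = 1" by simp
  next
    assume "s = 1" hence h: "sgn (a k) = 1" by (simp add: s_def)
    from R show "\<forall>\<^sub>F y in at_right x. f y > 0"
      by eventually_elim (use h in \<open>auto simp: sgn_1_pos\<close>)
  qed
  have negR: "(\<forall>\<^sub>F y in at_right x. f y < 0) \<longleftrightarrow> s = -1"
  proof
    assume "\<forall>\<^sub>F y in at_right x. f y < 0"
    with R have "\<forall>\<^sub>F y in at_right x. s = -1" unfolding s_def by eventually_elim auto
    thus "s = -1" by simp
  next
    assume "s = -1" hence h: "sgn (a k) = -1" by (simp add: s_def)
    from R show "\<forall>\<^sub>F y in at_right x. f y < 0"
      by eventually_elim (use h in \<open>auto simp: sgn_1_neg\<close>)
  qed
  have posL: "(\<forall>\<^sub>F y in at_left x. f y > 0) \<longleftrightarrow> (-1)^k * s = 1"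
  proof
    assume "\<forall>\<^sub>F y in at_left x. f y > 0"
    with L have "\<forall>\<^sub>F y in at_left x. (-1)^k * s = 1" unfolding s_def by eventually_elim auto
    thus "(-1)^k * s = 1" by simp
  next
    assume "(-1)^k * s = 1" hence h: "(-1)^k * sgn (a k) = 1" by (simp add: s_def)
    from L show "\<forall>\<^sub>F y in at_left x. f y > 0"
      by eventually_elim (use h in \<open>auto simp: sgn_1_pos\<close>)
  qed
  have negL: "(\<forall>\<^sub>F y in at_left x. f y < 0) \<longleftrightarrow> (-1)^k * s = -1"
  proof
    assume "\<forall>\<^sub>F y in at_left x. f y < 0"
    with L have "\<forall>\<^sub>F y in at_left x. (-1)^k * s = -1" unfolding s_def by eventually_elim auto
    thus "(-1)^k * s = -1" by simp
  next
    assume "(-1)^k * s = -1" hence h: "(-1)^k * sgn (a k) = -1" by (simp add: s_def)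
    from L show "\<forall>\<^sub>F y in at_left x. f y < 0"
      by eventually_elim (use h in \<open>auto simp: sgn_1_neg\<close>)
  qed
  have vs': "vanish_sign f x = (if s = 1 then 1 else -1)"
    using vs s ak unfolding s_def by (auto simp: sgn_real_def split: if_splits)
  have kap: "kappa_plus_branch f x - kappa_minus_branch f x = (if even k then 0 else vanish_sign f x)"
    unfolding kappa_plus_branch_def kappa_minus_branch_def vo Let_def
    using vs by (auto elim!: oddE)
  show ?thesis
  proof (intro conjI)
    show "(\<forall>\<^sub>F y in at_right x. f y > 0) \<or> (\<forall>\<^sub>F y in at_right x. f y < 0)"
      using posR negR s by auto
    show "(\<forall>\<^sub>F y in at_left x. f y > 0) \<or> (\<forall>\<^sub>F y in at_left x. f y < 0)"
      using posL negL s by (cases "even k") auto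
    show "kappa_plus_branch f x - kappa_minus_branch f x =
          (if \<forall>\<^sub>F y in at_right x. f y > 0 then 1 else 0) - (if \<forall>\<^sub>F y in at_left x. f y > 0 then 1 else 0)"
      unfolding kap posR posL vs' using s by (cases "even k") auto
  qed
qed


definition sR :: "(real \<Rightarrow> real) \<Rightarrow> real \<Rightarrow> int" where
  "sR f z = (if \<forall>\<^sub>F y in at_right z. f y > 0 then 1 else 0)"
definition sL :: "(real \<Rightarrow> real) \<Rightarrow> real \<Rightarrow> int" where
  "sL f z = (if \<forall>\<^sub>F y in at_left z. f y > 0 then 1 else 0)"

lemma const_sign:
  fixes f :: "real \<Rightarrow> real"
  assumes cont: "continuous_on UNIV f" and nz: "\<forall>y. c < y \<and> y < d \<longrightarrow> f y \<noteq> 0"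
  shows "(\<forall>y. c < y \<and> y < d \<longrightarrow> f y > 0) \<or> (\<forall>y. c < y \<and> y < d \<longrightarrow> f y < 0)"
proof (rule ccontr)
  assume "\<not> ?thesis"
  then obtain y1 y2 where y1: "c < y1" "y1 < d" "\<not> f y1 > 0" and y2: "c < y2" "y2 < d" "\<not> f y2 < 0" by blast
  from y1 nz have f1: "f y1 < 0" by force
  from y2 nz have f2: "f y2 > 0" by force
  have co: "continuous_on {a..b} f" for a b using cont by (rule continuous_on_subset) auto
  show False
  proof (cases "y1 \<le> y2")
    case True
    from IVT'[of f y1 0 y2, OF _ _ True co] f1 f2 obtain z where "y1 \<le> z" "z \<le> y2" "f z = 0" by auto
    with nz y1 y2 show False by force
  next
    case False
    hence "y2 \<le> y1" by simp
    from IVT2'[of f y1 0 y2, OF _ _ this co] f1 f2 obtain z where "y2 \<le> z" "z \<le> y1" "f z = 0" by auto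
    with nz y1 y2 show False by force
  qed
qed

lemma gap_eq:
  fixes f :: "real \<Rightarrow> real"
  assumes cont: "continuous_on UNIV f" and cd: "c < d" and nz: "\<forall>y. c < y \<and> y < d \<longrightarrow> f y \<noteq> 0"
  shows "sR f c = sL f d"
proof -
  have evR: "\<forall>\<^sub>F y in at_right c. c < y \<and> y < d" using cd eventually_at_right[of c d] by blast
  have evL: "\<forall>\<^sub>F y in at_left d. c < y \<and> y < d" using cd eventually_at_left[of c d] by blast
  from const_sign[OF cont nz] show ?thesis
  proof
    assume p: "\<forall>y. c < y \<and> y < d \<longrightarrow> f y > 0"
    have "\<forall>\<^sub>F y in at_right c. f y > 0" using evR by eventually_elim (use p in auto)
    moreover have "\<forall>\<^sub>F y in at_left d. f y > 0" using evL by eventually_elim (use p in auto)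
    ultimately show ?thesis unfolding sR_def sL_def by simp
  next
    assume p: "\<forall>y. c < y \<and> y < d \<longrightarrow> f y < 0"
    have "\<not> (\<forall>\<^sub>F y in at_right c. f y > 0)"
    proof
      assume "\<forall>\<^sub>F y in at_right c. f y > 0"
      with evR have "\<forall>\<^sub>F y in at_right c. False" by eventually_elim (use p in force)
      thus False by simp
    qed
    moreover have "\<not> (\<forall>\<^sub>F y in at_left d. f y > 0)"
    proof
      assume "\<forall>\<^sub>F y in at_left d. f y > 0"
      with evL have "\<forall>\<^sub>F y in at_left d. False" by eventually_elim (use p in force)
      thus False by simp
    qed
    ultimately show ?thesis unfolding sR_def sL_def by simp
  qed
qed

lemma telescope:
  fixes f :: "real \<Rightarrow> real"
  assumes cont: "continuous_on UNIV f" and fin: "finite S"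
  shows "\<forall>b. a < b \<and> S \<subseteq> {a<..<b} \<and> (\<forall>y. a < y \<and> y < b \<and> f y = 0 \<longrightarrow> y \<in> S) \<longrightarrow>
     (\<Sum>z\<in>S. sR f z - sL f z) = sL f b - sR f a"
  using fin
proof (induct S rule: finite_remove_induct)
  case empty
  show ?case
  proof (intro allI impI)
    fix b assume h: "a < b \<and> {} \<subseteq> {a<..<b} \<and> (\<forall>y. a < y \<and> y < b \<and> f y = 0 \<longrightarrow> y \<in> {})"
    hence "sR f a = sL f b" by (intro gap_eq[OF cont]) auto
    thus "(\<Sum>z\<in>{}. sR f z - sL f z) = sL f b - sR f a" by simp
  qed
next
  case (remove A)
  show ?case
  proof (intro allI impI)
    fix b assume h: "a < b \<and> A \<subseteq> {a<..<b} \<and> (\<forall>y. a < y \<and> y < b \<and> f y = 0 \<longrightarrow> y \<in> A)"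
    define m where "m = Max A"
    have mA: "m \<in> A" unfolding m_def using remove by simp
    have mx: "\<And>z. z \<in> A \<Longrightarrow> z \<le> m" unfolding m_def using remove by simp
    have am: "a < m" "m < b" using mA h by auto
    have s1: "A - {m} \<subseteq> {a<..<m}"
    proof
      fix z assume z: "z \<in> A - {m}"
      hence "z \<le> m" "z \<noteq> m" "z \<in> A" using mx by auto
      moreover have "a < z" using h \<open>z \<in> A\<close> by auto
      ultimately show "z \<in> {a<..<m}" by auto
    qed
    have s2: "\<forall>y. a < y \<and> y < m \<and> f y = 0 \<longrightarrow> y \<in> A - {m}"
    proof (intro allI impI)
      fix y assume y: "a < y \<and> y < m \<and> f y = 0"
      hence "y \<in> A" using h am by auto
      thus "y \<in> A - {m}" using y by auto
    qed
    have IH: "(\<Sum>z\<in>A - {m}. sR f z - sL f z) = sL f m - sR f a"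
      using remove(4)[OF mA] am(1) s1 s2 by blast
    have s3: "\<forall>y. m < y \<and> y < b \<longrightarrow> f y \<noteq> 0"
    proof (intro allI impI notI)
      fix y assume y: "m < y \<and> y < b" "f y = 0"
      hence "y \<in> A" using h am by auto
      hence "y \<le> m" by (rule mx)
      with y show False by simp
    qed
    have g: "sR f m = sL f b"
      by (rule gap_eq[OF cont am(2) s3])
    have "(\<Sum>z\<in>A. sR f z - sL f z) = (sR f m - sL f m) + (\<Sum>z\<in>A - {m}. sR f z - sL f z)"
      using mA remove(1) by (simp add: sum.remove)
    thus "(\<Sum>z\<in>A. sR f z - sL f z) = sL f b - sR f a" using IH g by simp
  qed
qed


lemma pencil_carrier[simp]: "pencil N p L z \<in> carrier_mat N N"
  unfolding pencil_def by simp

lemma pencil_index: "i < N \<Longrightarrow> j < N \<Longrightarrow> pencil N p L z $$ (i,j) = (\<Sum>k\<le>p. z ^ k * L k $$ (i,j))"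
  unfolding pencil_def by simp

lemma pencil_zero: assumes "L 0 \<in> carrier_mat N N" shows "pencil N p L 0 = L 0"
proof (rule eq_matI)
  fix i j assume "i < dim_row (L 0)" "j < dim_col (L 0)"
  hence ij: "i < N" "j < N" using assms by auto
  have "(\<Sum>k\<le>p. (0::complex) ^ k * L k $$ (i,j)) = (\<Sum>k\<le>p. (if k = 0 then L 0 $$ (i,j) else 0))"
    by (rule sum.cong) (auto simp: power_0_left)
  also have "\<dots> = L 0 $$ (i,j)" by (simp add: sum.delta)
  finally show "pencil N p L 0 $$ (i,j) = L 0 $$ (i,j)" using ij by (simp add: pencil_index)
qed (use assms in \<open>auto simp: pencil_def\<close>)

lemma pencil_herm:
  assumes herm: "\<forall>j\<le>p. hermitian_mat N (L j)"
  shows "\<forall>i<N. \<forall>j<N. pencil N p L (complex_of_real x) $$ (i,j) = cnj (pencil N p L (complex_of_real x) $$ (j,i))"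
proof (intro allI impI)
  fix i j assume ij: "i < N" "j < N"
  have "(\<Sum>k\<le>p. complex_of_real x ^ k * L k $$ (i,j)) = (\<Sum>k\<le>p. cnj (complex_of_real x ^ k * L k $$ (j,i)))"
  proof (rule sum.cong[OF refl])
    fix k assume "k \<in> {..p}"
    hence "hermitian_mat N (L k)" using herm by auto
    hence "L k $$ (i,j) = cnj (L k $$ (j,i))" using ij unfolding hermitian_mat_def by blast
    thus "complex_of_real x ^ k * L k $$ (i,j) = cnj (complex_of_real x ^ k * L k $$ (j,i))" by simp
  qed
  thus "pencil N p L (complex_of_real x) $$ (i,j) = cnj (pencil N p L (complex_of_real x) $$ (j,i))"
    using ij by (simp add: pencil_index)
qed

lemma det_pencil_poly: "\<exists>q. \<forall>z. det (pencil N p L z) = poly q z"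
proof -
  define P where "P = mat N N (\<lambda>(i,j). \<Sum>k\<le>p. monom (L k $$ (i,j)) k)"
  have "poly (det P) z = det (pencil N p L z)" for z
    by (rule poly_det_cong[of _ N]) (auto simp: P_def pencil_index poly_sum poly_monom mult.commute)
  thus ?thesis by metis
qed

lemma invertible_det_nz: assumes "A \<in> carrier_mat n n" "invertible_mat A" shows "det A \<noteq> 0"
proof -
  from assms(2) obtain B where AB: "A * B = 1\<^sub>m (dim_row A)" and BA: "B * A = 1\<^sub>m (dim_row B)"
    unfolding invertible_mat_def inverts_mat_def by blast
  have "dim_row B = n" using arg_cong[OF BA, of dim_col] assms(1) by simp
  moreover have "dim_col B = n" using arg_cong[OF AB, of dim_col] assms(1) by simp
  ultimately have B: "B \<in> carrier_mat n n" by auto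
  have "det A * det B = 1" using det_mult[OF assms(1) B] AB assms(1) by simp
  thus ?thesis by auto
qed

lemma char_poly_eval: fixes A :: "'a::field mat" assumes A: "A \<in> carrier_mat n n"
  shows "poly (char_poly A) z = det (z \<cdot>\<^sub>m 1\<^sub>m n - A)"
proof -
  have "- char_matrix A z = z \<cdot>\<^sub>m 1\<^sub>m n - A"
    using A unfolding char_matrix_def by (intro eq_matI) auto
  thus ?thesis using char_poly_matrix[OF A] by simp
qed

lemma det_zero_char_poly: fixes A :: "'a::field mat" assumes A: "A \<in> carrier_mat n n"
  shows "det A = 0 \<longleftrightarrow> poly (char_poly A) 0 = 0"
proof -
  have "(0::'a) \<cdot>\<^sub>m 1\<^sub>m n - A = - A" using A by (intro eq_matI) auto
  hence "poly (char_poly A) 0 = det (- A)" unfolding char_poly_eval[OF A] by simp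
  thus ?thesis using det_0_negate[OF A] by simp
qed


lemma order_linear_gen: "Polynomial.order a [:-b, 1:] = (if a = b then 1 else (0::nat))" for a b :: "'a::idom"
proof (cases "a = b")
  case True then show ?thesis using order_power_n_n[of a 1] by simp
next
  case False
  have "poly [:-b, 1:] a \<noteq> 0" using False by simp
  hence "Polynomial.order a [:-b, 1:] = 0" using order_root[of "[:-b,1:]" a] by blast
  thus ?thesis using False by simp
qed

lemma order_prod_linear:
  fixes c :: "nat \<Rightarrow> 'a::idom"
  shows "Polynomial.order a (\<Prod>i<n. [:-c i, 1:]) = card {i. i < n \<and> c i = a}"
proof (induct n)
  case 0
  have "Polynomial.order a (1::'a poly) = 0" using order_root[of "1::'a poly" a] by simp
  thus ?case by simp
next
  case (Suc n)
  have f1: "(\<Prod>i<n. [:-c i, 1:]) \<noteq> 0" by (subst prod_zero_iff) auto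
  have nz: "(\<Prod>i<n. [:-c i, 1:]) * [:-c n, 1:] \<noteq> 0"
    by (rule no_zero_divisors[OF f1]) simp
  have "Polynomial.order a (\<Prod>i<Suc n. [:-c i, 1:]) = Polynomial.order a (\<Prod>i<n. [:-c i, 1:]) + Polynomial.order a [:-c n, 1:]"
    using order_mult[OF nz] by simp
  also have "\<dots> = card {i. i < n \<and> c i = a} + (if a = c n then 1 else 0)"
    using Suc order_linear_gen[of a "c n"] by simp
  also have "\<dots> = card {i. i < Suc n \<and> c i = a}"
  proof (cases "c n = a")
    case True
    have "{i. i < Suc n \<and> c i = a} = insert n {i. i < n \<and> c i = a}" using True by auto
    thus ?thesis using True by simp
  next
    case False
    have "{i. i < Suc n \<and> c i = a} = {i. i < n \<and> c i = a}" using False less_Suc_eq by auto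
    thus ?thesis using False by simp
  qed
  finally show ?case .
qed

lemma order_prod_list_linear:
  fixes bs :: "'a::idom list"
  shows "Polynomial.order a (\<Prod>b\<leftarrow>bs. [:-b, 1:]) = count (mset bs) a"
proof (induct bs)
  case Nil
  have "Polynomial.order a (1::'a poly) = 0" using order_root[of "1::'a poly" a] by simp
  thus ?case by simp
next
  case (Cons b bs)
  have f1: "(\<Prod>b\<leftarrow>bs. [:-b, 1:]) \<noteq> 0" by (subst prod_list_zero_iff) auto
  have nz: "[:-b, 1:] * (\<Prod>b\<leftarrow>bs. [:-b, 1:]) \<noteq> 0"
    by (rule no_zero_divisors[OF _ f1]) simp
  show ?case using order_mult[OF nz] Cons order_linear_gen[of a b] by auto
qed

lemma count_map_upt: "count (mset (map g [0..<n])) t = card {i. i < n \<and> g i = t}"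
proof (induct n)
  case 0 show ?case by simp
next
  case (Suc n)
  have "{i. i < Suc n \<and> g i = t} = (if g n = t then insert n {i. i < n \<and> g i = t} else {i. i < n \<and> g i = t})"
    by (auto simp: less_Suc_eq)
  thus ?case using Suc by simp
qed

lemma char_poly_nz: "A \<in> carrier_mat n n \<Longrightarrow> char_poly A \<noteq> 0"
  using degree_monic_char_poly[of A n] by auto

lemma prod_to_count:
  fixes A :: "complex mat" and g :: "nat \<Rightarrow> real"
  assumes A: "A \<in> carrier_mat N N" and pr: "\<forall>z. poly (char_poly A) z = (\<Prod>i<N. z - of_real (g i))"
  shows "\<forall>t. count (mset (map g [0..<N])) t = Polynomial.order (of_real t) (char_poly A)"
proof
  fix t
  have "poly (char_poly A) = poly (\<Prod>i<N. [:-of_real (g i), 1:])"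
    using pr by (auto simp: poly_prod)
  hence cp: "char_poly A = (\<Prod>i<N. [:-of_real (g i), 1:])" by (simp add: poly_eq_poly_eq_iff)
  show "count (mset (map g [0..<N])) t = Polynomial.order (of_real t) (char_poly A)"
    unfolding cp order_prod_linear count_map_upt by simp
qed

lemma count_to_prod:
  fixes A :: "complex mat" and g :: "nat \<Rightarrow> real"
  assumes A: "A \<in> carrier_mat N N" and cnt: "\<forall>t. count (mset (map g [0..<N])) t = Polynomial.order (of_real t) (char_poly A)"
  shows "char_poly A = (\<Prod>i<N. [:-of_real (g i), 1:])"
proof -
  obtain as where cp: "char_poly A = (\<Prod>a\<leftarrow>as. [:-a, 1:])" and len: "length as = N"
    using char_poly_factorized[OF A] by blast
  define Mg where "Mg = mset (map (complex_of_real \<circ> g) [0..<N])"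
  have le: "count Mg z \<le> count (mset as) z" for z
  proof (cases "\<exists>t. z = of_real t")
    case True
    then obtain t where z: "z = of_real t" by blast
    have "count Mg z = card {i. i < N \<and> complex_of_real (g i) = z}"
      unfolding Mg_def count_map_upt by simp
    also have "\<dots> = card {i. i < N \<and> g i = t}" unfolding z by simp
    also have "\<dots> = Polynomial.order (of_real t) (char_poly A)" using cnt count_map_upt by metis
    also have "\<dots> = count (mset as) z" unfolding cp order_prod_list_linear z ..
    finally show ?thesis by simp
  next
    case False
    have "count Mg z = card {i. i < N \<and> complex_of_real (g i) = z}"
      unfolding Mg_def count_map_upt by simp
    also have "{i. i < N \<and> complex_of_real (g i) = z} = {}" using False by auto
    finally show ?thesis by simp
  qed
  have sub: "Mg \<subseteq># mset as" by (rule mset_subset_eqI) (rule le)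
  have eq: "Mg = mset as"
  proof (rule ccontr)
    assume "Mg \<noteq> mset as"
    with sub have "Mg \<subset># mset as" by (simp add: subset_mset.le_imp_less_or_eq)
    hence "size Mg < size (mset as)" by (rule mset_subset_size)
    thus False unfolding Mg_def using len by simp
  qed
  have "(\<Prod>a\<leftarrow>as. [:-a, 1:]) = prod_mset (image_mset (\<lambda>a. [:-a, 1:]) (mset as))"
    by (simp add: prod_mset_prod_list[symmetric] mset_map)
  also have "\<dots> = prod_mset (image_mset (\<lambda>a. [:-a, 1:]) Mg)" unfolding eq ..
  also have "\<dots> = (\<Prod>i\<in>{0..<N}. [:-of_real (g i), 1:])"
    unfolding Mg_def prod_unfold_prod_mset by (simp add: multiset.map_comp o_def)
  also have "\<dots> = (\<Prod>i<N. [:-of_real (g i), 1:])"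
    by (simp add: atLeast0LessThan)
  finally show ?thesis using cp by simp
qed

lemma count_sum_roots:
  fixes A :: "complex mat" and g :: "nat \<Rightarrow> real"
  assumes A: "A \<in> carrier_mat N N" and cnt: "\<forall>t. count (mset (map g [0..<N])) t = Polynomial.order (of_real t) (char_poly A)"
  shows "(\<Sum>t\<in>{t::real. P t \<and> poly (char_poly A) (complex_of_real t) = 0}. Polynomial.order (complex_of_real t) (char_poly A))
    = card {i. i < N \<and> P (g i)}"
proof -
  have nz: "char_poly A \<noteq> 0" by (rule char_poly_nz[OF A])
  have ord: "Polynomial.order (complex_of_real t) (char_poly A) = card {i. i < N \<and> g i = t}" for t
    using cnt count_map_upt by metis
  let ?T = "{t::real. P t \<and> poly (char_poly A) (complex_of_real t) = 0}"
  have T: "?T = {t. P t \<and> (\<exists>i<N. g i = t)}"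
  proof -
    have "poly (char_poly A) (complex_of_real t) = 0 \<longleftrightarrow> (\<exists>i<N. g i = t)" for t
      using order_root[of "char_poly A" "complex_of_real t"] nz ord[of t] by (auto simp: card_eq_0_iff)
    thus ?thesis by auto
  qed
  have finT: "finite ?T" unfolding T by (rule finite_subset[of _ "g ` {..<N}"]) auto
  have "(\<Sum>t\<in>?T. Polynomial.order (complex_of_real t) (char_poly A)) = (\<Sum>t\<in>?T. card {i. i < N \<and> g i = t})"
    using ord by simp
  also have "\<dots> = card (\<Union>t\<in>?T. {i. i < N \<and> g i = t})"
    by (rule card_UN_disjoint[symmetric]) (use finT in auto)
  also have "(\<Union>t\<in>?T. {i. i < N \<and> g i = t}) = {i. i < N \<and> P (g i)}" unfolding T by auto
  finally show ?thesis .
qed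

lemma branch_counts:
  fixes A :: "complex mat" and g :: "nat \<Rightarrow> real"
  assumes A: "A \<in> carrier_mat N N" and cnt: "\<forall>t. count (mset (map g [0..<N])) t = Polynomial.order (of_real t) (char_poly A)"
  shows "Nneg_mat A = card {i. i < N \<and> g i < 0}"
    and "Npos_mat A = card {i. i < N \<and> g i > 0}"
    and "Polynomial.order 0 (char_poly A) = card {i. i < N \<and> g i = 0}"
    and "det A = 0 \<longleftrightarrow> (\<exists>i<N. g i = 0)"
proof -
  show "Nneg_mat A = card {i. i < N \<and> g i < 0}"
    unfolding Nneg_mat_def using count_sum_roots[OF A cnt, of "\<lambda>t. t < 0"] by simp
  show "Npos_mat A = card {i. i < N \<and> g i > 0}"
    unfolding Npos_mat_def using count_sum_roots[OF A cnt, of "\<lambda>t. t > 0"] by simp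
  show o0: "Polynomial.order 0 (char_poly A) = card {i. i < N \<and> g i = 0}"
    using cnt[rule_format, of 0] count_map_upt[of g N 0] by simp
  have nz: "char_poly A \<noteq> 0" by (rule char_poly_nz[OF A])
  show "det A = 0 \<longleftrightarrow> (\<exists>i<N. g i = 0)"
    unfolding det_zero_char_poly[OF A] using order_root[of "char_poly A" 0] nz o0
    by (auto simp: card_eq_0_iff)
qed


lemma pencil_dims[simp]: "dim_row (pencil N p L z) = N" "dim_col (pencil N p L z) = N"
  unfolding pencil_def by auto

definition Mrev :: "nat \<Rightarrow> nat \<Rightarrow> (nat \<Rightarrow> complex mat) \<Rightarrow> complex \<Rightarrow> complex mat" where
  "Mrev N p L s = pencil N p (\<lambda>j. L (p - j)) s"

lemma Mrev_scale:
  assumes s: "s \<noteq> 0"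
  shows "Mrev N p L s = (s ^ p) \<cdot>\<^sub>m pencil N p L (1 / s)"
proof (rule eq_matI)
  fix i j assume "i < dim_row (s ^ p \<cdot>\<^sub>m pencil N p L (1 / s))" "j < dim_col (s ^ p \<cdot>\<^sub>m pencil N p L (1 / s))"
  hence ij: "i < N" "j < N" by (auto simp: pencil_def)
  have "(\<Sum>k\<le>p. s ^ k * L (p - k) $$ (i,j)) = (\<Sum>k<Suc p. s ^ (p - (Suc p - Suc k)) * L (Suc p - Suc k) $$ (i,j))"
    by (rule sum.cong) auto
  also have "\<dots> = (\<Sum>k<Suc p. s ^ (p - k) * L k $$ (i,j))"
    by (rule sum.nat_diff_reindex[where g = "\<lambda>k. s ^ (p - k) * L k $$ (i,j)"])
  also have "\<dots> = (\<Sum>k\<le>p. s ^ p * ((1 / s) ^ k * L k $$ (i,j)))"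
  proof (rule sum.cong)
    fix k assume "k \<in> {..p}"
    hence "k \<le> p" by simp
    thus "s ^ (p - k) * L k $$ (i,j) = s ^ p * ((1 / s) ^ k * L k $$ (i,j))"
      using s by (simp add: power_diff power_one_over field_simps)
  qed (simp add: lessThan_Suc_atMost)
  also have "\<dots> = s ^ p * (\<Sum>k\<le>p. (1 / s) ^ k * L k $$ (i,j))" by (simp add: sum_distrib_left)
  finally show "Mrev N p L s $$ (i,j) = (s ^ p \<cdot>\<^sub>m pencil N p L (1 / s)) $$ (i,j)"
    using ij by (simp add: Mrev_def pencil_index)
qed (simp_all add: Mrev_def)

lemma char_poly_smult_eval:
  fixes B :: "complex mat"
  assumes B: "B \<in> carrier_mat n n" and c: "c \<noteq> 0"
  shows "poly (char_poly (c \<cdot>\<^sub>m B)) z = c ^ n * poly (char_poly B) (z / c)"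
proof -
  have cB: "c \<cdot>\<^sub>m B \<in> carrier_mat n n" using B by simp
  have "z \<cdot>\<^sub>m 1\<^sub>m n - c \<cdot>\<^sub>m B = c \<cdot>\<^sub>m ((z / c) \<cdot>\<^sub>m 1\<^sub>m n - B)"
    using B c by (intro eq_matI) (auto simp: field_simps)
  hence "det (z \<cdot>\<^sub>m 1\<^sub>m n - c \<cdot>\<^sub>m B) = c ^ n * det ((z / c) \<cdot>\<^sub>m 1\<^sub>m n - B)"
    using B by simp
  thus ?thesis unfolding char_poly_eval[OF cB] char_poly_eval[OF B] .
qed

lemma Mrev_zero: assumes "L p \<in> carrier_mat N N" shows "Mrev N p L 0 = L p"
  unfolding Mrev_def by (rule pencil_zero[of "\<lambda>j. L (p - j)", simplified]) (use assms in simp)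

lemma det_Mrev_formula:
  "det (z \<cdot>\<^sub>m 1\<^sub>m N - Mrev N p L s) =
    (\<Sum>\<pi> \<in> {\<pi>. \<pi> permutes {0..<N}}. signof \<pi> *
       (\<Prod>i = 0..<N. (if i = \<pi> i then z else 0) - (\<Sum>k\<le>p. s ^ k * L (p - k) $$ (i, \<pi> i))))"
proof -
  have C: "z \<cdot>\<^sub>m 1\<^sub>m N - Mrev N p L s \<in> carrier_mat N N"
    unfolding Mrev_def by (rule minus_carrier_mat) simp
  show ?thesis unfolding det_def'[OF C]
  proof (rule sum.cong[OF refl])
    fix \<pi> assume "\<pi> \<in> {\<pi>. \<pi> permutes {0..<N}}"
    hence pi: "\<pi> permutes {0..<N}" by simp
    show "signof \<pi> * (\<Prod>i = 0..<N. (z \<cdot>\<^sub>m 1\<^sub>m N - Mrev N p L s) $$ (i, \<pi> i)) =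
          signof \<pi> * (\<Prod>i = 0..<N. (if i = \<pi> i then z else 0) - (\<Sum>k\<le>p. s ^ k * L (p - k) $$ (i, \<pi> i)))"
    proof (rule arg_cong[where f = "\<lambda>x. signof \<pi> * x"], rule prod.cong[OF refl])
      fix i assume i: "i \<in> {0..<N}"
      hence pii: "\<pi> i < N" using permutes_in_image[OF pi] by simp
      show "(z \<cdot>\<^sub>m 1\<^sub>m N - Mrev N p L s) $$ (i, \<pi> i) = (if i = \<pi> i then z else 0) - (\<Sum>k\<le>p. s ^ k * L (p - k) $$ (i, \<pi> i))"
        using i pii by (simp add: Mrev_def pencil_index)
    qed
  qed
qed

lemma Mrev_cont: "isCont (\<lambda>s. poly (char_poly (Mrev N p L s)) z) s0"
proof -
  have C: "Mrev N p L s \<in> carrier_mat N N" for s by (simp add: Mrev_def)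
  have eq: "(\<lambda>s. poly (char_poly (Mrev N p L s)) z) = (\<lambda>s. (\<Sum>\<pi> \<in> {\<pi>. \<pi> permutes {0..<N}}. signof \<pi> *
       (\<Prod>i = 0..<N. (if i = \<pi> i then z else 0) - (\<Sum>k\<le>p. s ^ k * L (p - k) $$ (i, \<pi> i)))))"
    by (rule ext) (simp add: char_poly_eval[OF C] det_Mrev_formula)
  show ?thesis unfolding eq by (intro continuous_intros)
qed

lemma eigen_bound:
  fixes A :: "complex mat"
  assumes A: "A \<in> carrier_mat n n" and w: "poly (char_poly A) w = 0"
  shows "norm w \<le> (\<Sum>i<n. \<Sum>j<n. norm (A $$ (i,j)))"
proof -
  from w eigenvalue_root_char_poly[OF A] have "eigenvalue A w" by simp
  then obtain v where v: "v \<in> carrier_vec n" "v \<noteq> 0\<^sub>v n" "A *\<^sub>v v = w \<cdot>\<^sub>v v"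
    unfolding eigenvalue_def eigenvector_def using A by auto
  define M where "M = Max ((\<lambda>i. norm (v $ i)) ` {..<n})"
  have "\<exists>i<n. v $ i \<noteq> 0"
  proof (rule ccontr)
    assume "\<not> ?thesis"
    hence "v = 0\<^sub>v n" using v(1) by (intro eq_vecI) auto
    with v(2) show False by simp
  qed
  then obtain i0 where i0: "i0 < n" "v $ i0 \<noteq> 0" by blast
  have ne: "(\<lambda>i. norm (v $ i)) ` {..<n} \<noteq> {}" using i0 by auto
  have Mge: "norm (v $ i) \<le> M" if "i < n" for i unfolding M_def using that by (intro Max_ge) auto
  obtain m where m: "m < n" "norm (v $ m) = M"
    using Max_in[OF _ ne] unfolding M_def by auto
  have Mpos: "M > 0" using Mge[OF i0(1)] i0(2) by (smt (verit) norm_ge_zero zero_less_norm_iff)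
  have "(A *\<^sub>v v) $ m = (\<Sum>j<n. A $$ (m,j) * v $ j)"
    using A v(1) m(1) by (simp add: mult_mat_vec_def scalar_prod_def row_def atLeast0LessThan)
  hence eq: "w * v $ m = (\<Sum>j<n. A $$ (m,j) * v $ j)" using v(3) v(1) m(1) by simp
  have "norm w * M = norm (w * v $ m)" using m by (simp add: norm_mult)
  also have "\<dots> \<le> (\<Sum>j<n. norm (A $$ (m,j)) * norm (v $ j))" unfolding eq
    by (rule order_trans[OF norm_sum]) (simp add: norm_mult)
  also have "\<dots> \<le> (\<Sum>j<n. norm (A $$ (m,j)) * M)"
    by (rule sum_mono) (use Mge in \<open>auto intro: mult_left_mono\<close>)
  also have "\<dots> = (\<Sum>j<n. norm (A $$ (m,j))) * M" by (simp add: sum_distrib_right)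
  finally have "norm w \<le> (\<Sum>j<n. norm (A $$ (m,j)))" using Mpos by simp
  also have "\<dots> \<le> (\<Sum>i<n. \<Sum>j<n. norm (A $$ (i,j)))"
    by (rule member_le_sum[where f = "\<lambda>i. \<Sum>j<n. norm (A $$ (i,j))"]) (use m in \<open>auto intro: sum_nonneg\<close>)
  finally show ?thesis .
qed


lemma multi_subseq:
  fixes X :: "nat \<Rightarrow> nat \<Rightarrow> real"
  assumes bd: "\<forall>k i. i < n \<longrightarrow> \<bar>X k i\<bar> \<le> C"
  shows "\<exists>r l. strict_mono r \<and> (\<forall>i<n. (\<lambda>k. X (r k) i) \<longlonglongrightarrow> l i)"
  using bd
proof (induct n)
  case 0
  have "strict_mono (id :: nat \<Rightarrow> nat)" by (simp add: strict_mono_def)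
  thus ?case by blast
next
  case (Suc n)
  from Suc.prems have "\<forall>k i. i < n \<longrightarrow> \<bar>X k i\<bar> \<le> C" by auto
  from Suc.hyps[OF this] obtain r l where r: "strict_mono r" and l: "\<forall>i<n. (\<lambda>k. X (r k) i) \<longlonglongrightarrow> l i" by blast
  define Y where "Y k = X (r k) n" for k
  have "bounded (range Y)"
    unfolding bounded_iff using Suc.prems by (auto simp: Y_def)
  from bounded_imp_convergent_subsequence[OF this] obtain l' r' where
    r': "strict_mono r'" and l': "(Y \<circ> r') \<longlonglongrightarrow> l'" by blast
  have "strict_mono (r \<circ> r')" using r r' by (rule strict_mono_o)
  moreover have "\<forall>i<Suc n. (\<lambda>k. X ((r \<circ> r') k) i) \<longlonglongrightarrow> (l(n := l')) i"
  proof (intro allI impI)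
    fix i assume i: "i < Suc n"
    show "(\<lambda>k. X ((r \<circ> r') k) i) \<longlonglongrightarrow> (l(n := l')) i"
    proof (cases "i = n")
      case True
      thus ?thesis using l' by (simp add: Y_def o_def)
    next
      case False
      hence "i < n" using i by simp
      from LIMSEQ_subseq_LIMSEQ[OF l[rule_format, OF this] r'] False
      show ?thesis by (simp add: o_def)
    qed
  qed
  ultimately show ?case by blast
qed

lemma prod_scale: "(\<Prod>i<N. c * (f i :: complex)) = c ^ N * (\<Prod>i<N. f i)"
  by (simp add: prod.distrib)

lemma asymp:
  fixes N p :: nat and L :: "nat \<Rightarrow> complex mat" and mu :: "nat \<Rightarrow> real \<Rightarrow> real" and \<sigma> :: "nat \<Rightarrow> real"
  assumes Lp: "L p \<in> carrier_mat N N" and inv: "invertible_mat (L p)"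
    and br: "\<forall>x t. count (mset (map (\<lambda>i. mu i x) [0..<N])) t = Polynomial.order (complex_of_real t) (char_poly (pencil N p L (complex_of_real x)))"
    and s0: "\<forall>k. \<sigma> k \<noteq> 0 \<and> \<bar>\<sigma> k\<bar> \<le> 1" and sl: "\<sigma> \<longlonglongrightarrow> 0"
  shows "\<exists>l r. strict_mono r \<and> (\<forall>i<N. l i \<noteq> 0)
     \<and> (\<forall>t. count (mset (map l [0..<N])) t = Polynomial.order (complex_of_real t) (char_poly (L p)))
     \<and> (\<forall>\<^sub>F k in sequentially. \<forall>i<N. sgn (\<sigma> (r k) ^ p * mu i (1 / \<sigma> (r k))) = sgn (l i))"
proof -
  define \<nu> where "\<nu> k i = \<sigma> k ^ p * mu i (1 / \<sigma> k)" for k i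
  have prodM: "poly (char_poly (Mrev N p L (complex_of_real (\<sigma> k)))) z = (\<Prod>i<N. z - complex_of_real (\<nu> k i))" for k z
  proof -
    define s where "s = complex_of_real (\<sigma> k)"
    define x where "x = 1 / \<sigma> k"
    have s: "s \<noteq> 0" using s0 unfolding s_def by simp
    have sx: "1 / s = complex_of_real x" unfolding s_def x_def by simp
    have cp: "char_poly (pencil N p L (complex_of_real x)) = (\<Prod>i<N. [:- complex_of_real (mu i x), 1:])"
      by (rule count_to_prod[OF pencil_carrier]) (use br in blast)
    have "poly (char_poly (Mrev N p L s)) z = (s ^ p) ^ N * poly (char_poly (pencil N p L (1 / s))) (z / s ^ p)"
      unfolding Mrev_scale[OF s] by (rule char_poly_smult_eval) (use s in auto)
    also have "\<dots> = (s ^ p) ^ N * (\<Prod>i<N. z / s ^ p - complex_of_real (mu i x))"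
      unfolding sx cp by (simp add: poly_prod)
    also have "\<dots> = (\<Prod>i<N. s ^ p * (z / s ^ p - complex_of_real (mu i x)))"
      by (simp add: prod_scale)
    also have "\<dots> = (\<Prod>i<N. z - complex_of_real (\<nu> k i))"
      by (rule prod.cong) (use s in \<open>auto simp: \<nu>_def s_def x_def field_simps\<close>)
    finally show ?thesis unfolding s_def .
  qed
  define C where "C = (\<Sum>a<N. \<Sum>b<N. \<Sum>j\<le>p. norm (L (p - j) $$ (a,b)))"
  have bd: "\<forall>k i. i < N \<longrightarrow> \<bar>\<nu> k i\<bar> \<le> C"
  proof (intro allI impI)
    fix k i assume i: "i < N"
    define s where "s = complex_of_real (\<sigma> k)"
    have s1: "norm s \<le> 1" using s0 unfolding s_def by simp
    have MC: "Mrev N p L s \<in> carrier_mat N N" by (simp add: Mrev_def)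
    have "poly (char_poly (Mrev N p L s)) (complex_of_real (\<nu> k i)) = 0"
      unfolding s_def prodM using i by (auto intro: prod_zero)
    from eigen_bound[OF MC this]
    have "\<bar>\<nu> k i\<bar> \<le> (\<Sum>a<N. \<Sum>b<N. norm (Mrev N p L s $$ (a,b)))" by simp
    also have "\<dots> \<le> C" unfolding C_def
    proof (intro sum_mono)
      fix a b assume ab: "a \<in> {..<N}" "b \<in> {..<N}"
      have "norm (Mrev N p L s $$ (a,b)) = norm (\<Sum>j\<le>p. s ^ j * L (p - j) $$ (a,b))"
        using ab by (simp add: Mrev_def pencil_index)
      also have "\<dots> \<le> (\<Sum>j\<le>p. norm (s ^ j * L (p - j) $$ (a,b)))" by (rule norm_sum)
      also have "\<dots> \<le> (\<Sum>j\<le>p. norm (L (p - j) $$ (a,b)))"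
      proof (rule sum_mono)
        fix j
        have "norm (s ^ j) \<le> 1" using s1 by (simp add: norm_power power_le_one)
        thus "norm (s ^ j * L (p - j) $$ (a,b)) \<le> norm (L (p - j) $$ (a,b))"
          by (simp add: norm_mult mult_left_le_one_le)
      qed
      finally show "norm (Mrev N p L s $$ (a,b)) \<le> (\<Sum>j\<le>p. norm (L (p - j) $$ (a,b)))" .
    qed
    finally show "\<bar>\<nu> k i\<bar> \<le> C" .
  qed
  from multi_subseq[OF bd] obtain r l where r: "strict_mono r"
    and l: "\<forall>i<N. (\<lambda>k. \<nu> (r k) i) \<longlonglongrightarrow> l i" by blast
  have cpL: "poly (char_poly (L p)) z = (\<Prod>i<N. z - complex_of_real (l i))" for z
  proof -
    have sr: "(\<lambda>k. complex_of_real (\<sigma> (r k))) \<longlonglongrightarrow> complex_of_real 0"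
      using LIMSEQ_subseq_LIMSEQ[OF sl r] by (intro tendsto_of_real) (simp add: o_def)
    have t1: "(\<lambda>k. poly (char_poly (Mrev N p L (complex_of_real (\<sigma> (r k))))) z) \<longlonglongrightarrow> poly (char_poly (Mrev N p L 0)) z"
      using isCont_tendsto_compose[OF Mrev_cont sr] by simp
    have t2: "(\<lambda>k. poly (char_poly (Mrev N p L (complex_of_real (\<sigma> (r k))))) z) \<longlonglongrightarrow> (\<Prod>i<N. z - complex_of_real (l i))"
      unfolding prodM by (intro tendsto_prod tendsto_diff tendsto_const tendsto_of_real) (use l in auto)
    from LIMSEQ_unique[OF t1 t2] show ?thesis using Mrev_zero[of L p N, OF Lp] by simp
  qed
  have cnt: "\<forall>t. count (mset (map l [0..<N])) t = Polynomial.order (complex_of_real t) (char_poly (L p))"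
    by (rule prod_to_count[OF Lp]) (use cpL in blast)
  have lnz: "\<forall>i<N. l i \<noteq> 0"
  proof (intro allI impI notI)
    fix i assume i: "i < N" "l i = 0"
    have "poly (char_poly (L p)) 0 = 0" unfolding cpL using i by (auto intro: prod_zero)
    hence "det (L p) = 0" using det_zero_char_poly[OF Lp] by simp
    with invertible_det_nz[OF Lp inv] show False by simp
  qed
  have ev: "\<forall>\<^sub>F k in sequentially. \<forall>i\<in>{..<N}. sgn (\<nu> (r k) i) = sgn (l i)"
  proof (rule eventually_ball_finite)
    show "finite {..<N}" by simp
    show "\<forall>i\<in>{..<N}. \<forall>\<^sub>F k in sequentially. sgn (\<nu> (r k) i) = sgn (l i)"
    proof
      fix i assume "i \<in> {..<N}"
      hence i: "i < N" by simp
      note li = l[rule_format, OF i]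
      show "\<forall>\<^sub>F k in sequentially. sgn (\<nu> (r k) i) = sgn (l i)"
      proof (cases "l i > 0")
        case True
        from order_tendstoD(1)[OF li True] show ?thesis by eventually_elim (use True in auto)
      next
        case False
        hence "l i < 0" using lnz i by (meson linorder_neqE_linordered_idom)
        from order_tendstoD(2)[OF li this] show ?thesis by eventually_elim (use \<open>l i < 0\<close> in auto)
      qed
    qed
  qed
  have ev2: "\<forall>\<^sub>F k in sequentially. \<forall>i<N. sgn (\<sigma> (r k) ^ p * mu i (1 / \<sigma> (r k))) = sgn (l i)"
    by (rule eventually_mono[OF ev]) (auto simp: \<nu>_def)
  show ?thesis using r lnz cnt ev2 by blast
qed


lemma sum_ind_card: fixes N :: nat shows "(\<Sum>i<N. if P i then 1 else 0 :: int) = int (card {i. i < N \<and> P i})"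
proof -
  have "(\<Sum>i\<in>{i\<in>{..<N}. P i}. 1::int) = (\<Sum>i<N. if P i then 1 else 0 :: int)"
    by (rule sum.inter_filter) simp
  hence "(\<Sum>i<N. if P i then 1 else 0 :: int) = (\<Sum>i\<in>{i\<in>{..<N}. P i}. 1)" by simp
  also have "{i\<in>{..<N}. P i} = {i. i < N \<and> P i}" by auto
  finally show ?thesis by simp
qed

lemma sRL_nz:
  fixes f :: "real \<Rightarrow> real"
  assumes c: "isCont f x" and nz: "f x \<noteq> 0"
  shows "sR f x = (if f x > 0 then 1 else 0) \<and> sL f x = (if f x > 0 then 1 else 0)"
proof -
  have t: "(f \<longlongrightarrow> f x) (at x)" using c by (simp add: isCont_def)
  show ?thesis
  proof (cases "f x > 0")
    case True
    from order_tendstoD(1)[OF t True] have ev: "\<forall>\<^sub>F y in at x. f y > 0" .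
    hence "\<forall>\<^sub>F y in at_right x. f y > 0" "\<forall>\<^sub>F y in at_left x. f y > 0"
      unfolding eventually_at_split by auto
    thus ?thesis using True unfolding sR_def sL_def by simp
  next
    case False
    hence neg: "f x < 0" using nz by simp
    from order_tendstoD(2)[OF t neg] have ev: "\<forall>\<^sub>F y in at x. f y < 0" .
    hence evR: "\<forall>\<^sub>F y in at_right x. f y < 0" and evL: "\<forall>\<^sub>F y in at_left x. f y < 0"
      unfolding eventually_at_split by auto
    have "\<not> (\<forall>\<^sub>F y in at_right x. f y > 0)"
    proof
      assume "\<forall>\<^sub>F y in at_right x. f y > 0"
      with evR have "\<forall>\<^sub>F y in at_right x. False" by eventually_elim auto
      thus False by simp
    qed
    moreover have "\<not> (\<forall>\<^sub>F y in at_left x. f y > 0)"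
    proof
      assume "\<forall>\<^sub>F y in at_left x. f y > 0"
      with evL have "\<forall>\<^sub>F y in at_left x. False" by eventually_elim auto
      thus False by simp
    qed
    ultimately show ?thesis using False unfolding sR_def sL_def by simp
  qed
qed

lemma sR_zero:
  fixes f :: "real \<Rightarrow> real"
  assumes an: "real_analytic f" and fx: "f x = 0" and iso: "\<forall>\<^sub>F y in at x. f y \<noteq> 0"
  shows "sR f x = 1 - (if \<forall>\<^sub>F y in at_right x. f y < 0 then 1 else 0)"
    and "sL f x = 1 - (if \<forall>\<^sub>F y in at_left x. f y < 0 then 1 else 0)"
proof -
  note A = analytic_zero[OF an fx iso]
  have nbR: "\<not> ((\<forall>\<^sub>F y in at_right x. f y > 0) \<and> (\<forall>\<^sub>F y in at_right x. f y < 0))"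
  proof
    assume h: "(\<forall>\<^sub>F y in at_right x. f y > 0) \<and> (\<forall>\<^sub>F y in at_right x. f y < 0)"
    hence "\<forall>\<^sub>F y in at_right x. f y > 0 \<and> f y < 0" by (intro eventually_conj) auto
    hence "\<forall>\<^sub>F y in at_right x. False" by (rule eventually_mono) auto
    thus False by simp
  qed
  have nbL: "\<not> ((\<forall>\<^sub>F y in at_left x. f y > 0) \<and> (\<forall>\<^sub>F y in at_left x. f y < 0))"
  proof
    assume h: "(\<forall>\<^sub>F y in at_left x. f y > 0) \<and> (\<forall>\<^sub>F y in at_left x. f y < 0)"
    hence "\<forall>\<^sub>F y in at_left x. f y > 0 \<and> f y < 0" by (intro eventually_conj) auto
    hence "\<forall>\<^sub>F y in at_left x. False" by (rule eventually_mono) auto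
    thus False by simp
  qed
  show "sR f x = 1 - (if \<forall>\<^sub>F y in at_right x. f y < 0 then 1 else 0)"
    using A nbR unfolding sR_def by auto
  show "sL f x = 1 - (if \<forall>\<^sub>F y in at_left x. f y < 0 then 1 else 0)"
    using A nbL unfolding sL_def by auto
qed

lemma kappa_eq:
  fixes mu :: "nat \<Rightarrow> real \<Rightarrow> real"
  assumes an: "\<forall>i<N. real_analytic (mu i)" and iso: "\<forall>i<N. mu i x = 0 \<longrightarrow> (\<forall>\<^sub>F y in at x. mu i y \<noteq> 0)"
  shows "kappa N mu x = (\<Sum>i<N. sR (mu i) x - sL (mu i) x)"
proof -
  have "kappa N mu x = (\<Sum>i\<in>{i. i < N \<and> mu i x = 0}. kappa_plus_branch (mu i) x - kappa_minus_branch (mu i) x)"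
    unfolding kappa_def kappa_plus_def kappa_minus_def by (simp add: sum_subtractf)
  also have "\<dots> = (\<Sum>i\<in>{i. i < N \<and> mu i x = 0}. sR (mu i) x - sL (mu i) x)"
  proof (rule sum.cong[OF refl])
    fix i assume "i \<in> {i. i < N \<and> mu i x = 0}"
    hence i: "i < N" "mu i x = 0" by auto
    from analytic_zero[OF an[rule_format, OF i(1)] i(2) iso[rule_format, OF i]]
    show "kappa_plus_branch (mu i) x - kappa_minus_branch (mu i) x = sR (mu i) x - sL (mu i) x"
      unfolding sR_def sL_def by blast
  qed
  also have "\<dots> = (\<Sum>i<N. sR (mu i) x - sL (mu i) x)"
  proof (rule sum.mono_neutral_left)
    show "\<forall>i\<in>{..<N} - {i. i < N \<and> mu i x = 0}. sR (mu i) x - sL (mu i) x = 0"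
    proof
      fix i assume "i \<in> {..<N} - {i. i < N \<and> mu i x = 0}"
      hence i: "i < N" "mu i x \<noteq> 0" by auto
      from sRL_nz[OF real_analytic_isCont[OF an[rule_format, OF i(1)]] i(2)]
      show "sR (mu i) x - sL (mu i) x = 0" by simp
    qed
  qed auto
  finally show ?thesis .
qed

lemma kappa_abs_le:
  fixes mu :: "nat \<Rightarrow> real \<Rightarrow> real"
  assumes an: "\<forall>i<N. real_analytic (mu i)" and iso: "\<forall>i<N. mu i x = 0 \<longrightarrow> (\<forall>\<^sub>F y in at x. mu i y \<noteq> 0)"
  shows "\<bar>kappa N mu x\<bar> \<le> int (card {i. i < N \<and> mu i x = 0})"
proof -
  have "\<bar>kappa N mu x\<bar> \<le> (\<Sum>i<N. \<bar>sR (mu i) x - sL (mu i) x\<bar>)"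
    unfolding kappa_eq[OF an iso] by (rule sum_abs)
  also have "\<dots> \<le> (\<Sum>i<N. if mu i x = 0 then 1 else 0)"
  proof (rule sum_mono)
    fix i assume "i \<in> {..<N}"
    hence i: "i < N" by simp
    show "\<bar>sR (mu i) x - sL (mu i) x\<bar> \<le> (if mu i x = 0 then 1 else 0)"
    proof (cases "mu i x = 0")
      case True thus ?thesis unfolding sR_def sL_def by auto
    next
      case False
      from sRL_nz[OF real_analytic_isCont[OF an[rule_format, OF i]] False] False show ?thesis by simp
    qed
  qed
  also have "\<dots> = int (card {i. i < N \<and> mu i x = 0})" by (rule sum_ind_card)
  finally show ?thesis .
qed

lemma asymp_side:
  fixes N p :: nat and L :: "nat \<Rightarrow> complex mat" and mu :: "nat \<Rightarrow> real \<Rightarrow> real" and e B0 :: real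
  assumes Lp: "L p \<in> carrier_mat N N" and inv: "invertible_mat (L p)"
    and br: "\<forall>x t. count (mset (map (\<lambda>i. mu i x) [0..<N])) t = Polynomial.order (complex_of_real t) (char_poly (pencil N p L (complex_of_real x)))"
    and podd: "odd p" and e: "e = 1 \<or> e = -1"
  shows "\<exists>x. e * x \<ge> B0 \<and> (\<forall>i<N. mu i x \<noteq> 0)
    \<and> card {i. i < N \<and> mu i x > 0} = (if e = 1 then Npos_mat (L p) else Nneg_mat (L p))
    \<and> Nneg_mat (L p) + Npos_mat (L p) = N"
proof -
  define B1 where "B1 = max B0 1"
  define \<sigma> where "\<sigma> k = e * inverse (B1 + real k)" for k
  have B1: "B1 \<ge> 1" "B1 \<ge> B0" unfolding B1_def by auto
  have pos: "B1 + real k > 0" for k using B1 by simp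
  have s0: "\<forall>k. \<sigma> k \<noteq> 0 \<and> \<bar>\<sigma> k\<bar> \<le> 1"
  proof
    fix k
    have "inverse (B1 + real k) \<le> 1" using B1 by (intro inverse_le_1_iff[THEN iffD2]) auto
    moreover have "inverse (B1 + real k) > 0" using pos[of k] by simp
    ultimately show "\<sigma> k \<noteq> 0 \<and> \<bar>\<sigma> k\<bar> \<le> 1" using e unfolding \<sigma>_def by (auto simp: abs_mult)
  qed
  have "filterlim (\<lambda>k. B1 + real k) at_top sequentially"
    by (rule filterlim_tendsto_add_at_top[OF tendsto_const filterlim_real_sequentially])
  hence "(\<lambda>k. inverse (B1 + real k)) \<longlonglongrightarrow> 0" by (rule tendsto_inverse_0_at_top)
  hence sl: "\<sigma> \<longlonglongrightarrow> 0" unfolding \<sigma>_def using tendsto_mult_right_zero by blast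
  from asymp[OF Lp inv br s0 sl] obtain l r where r: "strict_mono r" and lnz: "\<forall>i<N. l i \<noteq> 0"
    and cnt: "\<forall>t. count (mset (map l [0..<N])) t = Polynomial.order (complex_of_real t) (char_poly (L p))"
    and ev: "\<forall>\<^sub>F k in sequentially. \<forall>i<N. sgn (\<sigma> (r k) ^ p * mu i (1 / \<sigma> (r k))) = sgn (l i)" by blast
  from ev obtain K where K: "\<And>k. k \<ge> K \<Longrightarrow> \<forall>i<N. sgn (\<sigma> (r k) ^ p * mu i (1 / \<sigma> (r k))) = sgn (l i)"
    unfolding eventually_sequentially by blast
  define x where "x = 1 / \<sigma> (r K)"
  have xe: "x = e * (B1 + real (r K))" using e pos[of "r K"] unfolding x_def \<sigma>_def by (auto simp: field_simps)
  have ex: "e * x \<ge> B0" unfolding xe using e B1 by auto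
  have sgs: "sgn (\<sigma> (r K) ^ p) = e"
  proof -
    have "sgn (\<sigma> (r K)) = e" unfolding \<sigma>_def using e pos[of "r K"] by (auto simp: sgn_mult)
    hence "sgn (\<sigma> (r K) ^ p) = e ^ p" by (simp add: power_sgn)
    also have "\<dots> = e" using e podd by auto
    finally show ?thesis .
  qed
  have sg: "\<forall>i<N. e * sgn (mu i x) = sgn (l i)"
    using K[of K] sgs unfolding x_def by (simp add: sgn_mult)
  have nz: "\<forall>i<N. mu i x \<noteq> 0" using sg lnz by (metis mult_zero_right sgn_zero sgn_0_0)
  have eqset: "{i. i < N \<and> mu i x > 0} = (if e = 1 then {i. i < N \<and> l i > 0} else {i. i < N \<and> l i < 0})"
  proof -
    have "mu i x > 0 \<longleftrightarrow> (if e = 1 then l i > 0 else l i < 0)" if i: "i < N" for i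
    proof -
      have h: "e * sgn (mu i x) = sgn (l i)" using sg i by blast
      have mz: "mu i x \<noteq> 0" using nz i by blast
      have lz: "l i \<noteq> 0" using lnz i by blast
      show ?thesis using e h mz lz
        by (cases "mu i x > 0"; cases "l i > 0") (auto simp: sgn_real_def split: if_splits)
    qed
    thus ?thesis by auto
  qed
  note BC = branch_counts[OF Lp cnt]
  have "card {i. i < N \<and> l i < 0} + card {i. i < N \<and> l i > 0} = card ({i. i < N \<and> l i < 0} \<union> {i. i < N \<and> l i > 0})"
    by (rule card_Un_disjoint[symmetric]) auto
  also have "{i. i < N \<and> l i < 0} \<union> {i. i < N \<and> l i > 0} = {..<N}"
    using lnz by (auto simp: linorder_neq_iff)
  finally have sumN: "Nneg_mat (L p) + Npos_mat (L p) = N" using BC(1,2) by simp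
  show ?thesis
    by (rule exI[of _ x]) (use ex nz eqset BC(1,2) sumN in auto)
qed

lemma sR0_formula:
  fixes mu :: "nat \<Rightarrow> real \<Rightarrow> real"
  assumes an: "\<forall>i<N. real_analytic (mu i)" and iso: "\<forall>i<N. mu i x = 0 \<longrightarrow> (\<forall>\<^sub>F y in at x. mu i y \<noteq> 0)"
  shows "(\<Sum>i<N. sR (mu i) x) = int N - int (card {i. i < N \<and> mu i x < 0})
            - int (card {i. i < N \<and> mu i x = 0 \<and> (\<forall>\<^sub>F y in at_right x. mu i y < 0)})"
    and "(\<Sum>i<N. sL (mu i) x) = int N - int (card {i. i < N \<and> mu i x < 0})
            - int (card {i. i < N \<and> mu i x = 0 \<and> (\<forall>\<^sub>F y in at_left x. mu i y < 0)})"
proof -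
  have "(\<Sum>i<N. sR (mu i) x) = (\<Sum>i<N. 1 - (if mu i x < 0 then 1 else 0)
       - (if mu i x = 0 \<and> (\<forall>\<^sub>F y in at_right x. mu i y < 0) then 1 else 0))"
  proof (rule sum.cong[OF refl])
    fix i assume "i \<in> {..<N}"
    hence i: "i < N" by simp
    show "sR (mu i) x = 1 - (if mu i x < 0 then 1 else 0)
       - (if mu i x = 0 \<and> (\<forall>\<^sub>F y in at_right x. mu i y < 0) then 1 else 0)"
    proof (cases "mu i x = 0")
      case True
      from sR_zero(1)[OF an[rule_format, OF i] True iso[rule_format, OF i True]] True show ?thesis by simp
    next
      case False
      from sRL_nz[OF real_analytic_isCont[OF an[rule_format, OF i]] False] False show ?thesis by auto
    qed
  qed
  also have "\<dots> = int N - (\<Sum>i<N. if mu i x < 0 then 1 else 0)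
       - (\<Sum>i<N. if mu i x = 0 \<and> (\<forall>\<^sub>F y in at_right x. mu i y < 0) then 1 else 0)"
    by (simp add: sum_subtractf)
  finally show "(\<Sum>i<N. sR (mu i) x) = int N - int (card {i. i < N \<and> mu i x < 0})
            - int (card {i. i < N \<and> mu i x = 0 \<and> (\<forall>\<^sub>F y in at_right x. mu i y < 0)})"
    by (simp add: sum_ind_card)
  have "(\<Sum>i<N. sL (mu i) x) = (\<Sum>i<N. 1 - (if mu i x < 0 then 1 else 0)
       - (if mu i x = 0 \<and> (\<forall>\<^sub>F y in at_left x. mu i y < 0) then 1 else 0))"
  proof (rule sum.cong[OF refl])
    fix i assume "i \<in> {..<N}"
    hence i: "i < N" by simp
    show "sL (mu i) x = 1 - (if mu i x < 0 then 1 else 0)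
       - (if mu i x = 0 \<and> (\<forall>\<^sub>F y in at_left x. mu i y < 0) then 1 else 0)"
    proof (cases "mu i x = 0")
      case True
      from sR_zero(2)[OF an[rule_format, OF i] True iso[rule_format, OF i True]] True show ?thesis by simp
    next
      case False
      from sRL_nz[OF real_analytic_isCont[OF an[rule_format, OF i]] False] False show ?thesis by auto
    qed
  qed
  also have "\<dots> = int N - (\<Sum>i<N. if mu i x < 0 then 1 else 0)
       - (\<Sum>i<N. if mu i x = 0 \<and> (\<forall>\<^sub>F y in at_left x. mu i y < 0) then 1 else 0)"
    by (simp add: sum_subtractf)
  finally show "(\<Sum>i<N. sL (mu i) x) = int N - int (card {i. i < N \<and> mu i x < 0})
            - int (card {i. i < N \<and> mu i x = 0 \<and> (\<forall>\<^sub>F y in at_left x. mu i y < 0)})"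
    by (simp add: sum_ind_card)
qed

lemma sRL_far:
  fixes mu :: "nat \<Rightarrow> real \<Rightarrow> real"
  assumes an: "\<forall>i<N. real_analytic (mu i)" and nz: "\<forall>i<N. mu i x \<noteq> 0"
  shows "(\<Sum>i<N. sR (mu i) x) = int (card {i. i < N \<and> mu i x > 0})"
    and "(\<Sum>i<N. sL (mu i) x) = int (card {i. i < N \<and> mu i x > 0})"
proof -
  have "(\<Sum>i<N. sR (mu i) x) = (\<Sum>i<N. if mu i x > 0 then 1 else 0)"
    by (rule sum.cong[OF refl]) (use sRL_nz real_analytic_isCont an nz in auto)
  thus "(\<Sum>i<N. sR (mu i) x) = int (card {i. i < N \<and> mu i x > 0})" by (simp add: sum_ind_card)
  have "(\<Sum>i<N. sL (mu i) x) = (\<Sum>i<N. if mu i x > 0 then 1 else 0)"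
    by (rule sum.cong[OF refl]) (use sRL_nz real_analytic_isCont an nz in auto)
  thus "(\<Sum>i<N. sL (mu i) x) = int (card {i. i < N \<and> mu i x > 0})" by (simp add: sum_ind_card)
qed


theorem theorem6:
  fixes N l p :: nat and L :: "nat \<Rightarrow> complex mat" and mu :: "nat \<Rightarrow> real \<Rightarrow> real"
  assumes p_odd: "p = 2 * l + 1"
    and herm: "\<forall>j\<le>p. hermitian_mat N (L j)"
    and inv: "invertible_mat (L p)"
    and branches: "eigen_branches N p L mu"
  shows "int N - 2 * int (Nneg_mat (L 0)) - int (Zdown_pos N mu) - int (Zdown_neg N mu)
           + (\<Sum>x\<in>{x\<in>real_char_values N p L. 0 < x}. kappa N mu x)
           - (\<Sum>x\<in>{x\<in>real_char_values N p L. x < 0}. kappa N mu x) = 0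
         \<and> int (Npos_pencil N p L) \<ge>
           \<bar>int (Nneg_mat (L 0)) + int (Zdown_pos N mu) - int (Nneg_mat (L p))\<bar>
         \<and> int (Nneg_pencil N p L) \<ge>
           \<bar>int (Nneg_mat (L 0)) + int (Zdown_neg N mu) - int (Npos_mat (L p))\<bar>"
proof -
  from branches have an: "\<forall>i<N. real_analytic (mu i)"
    and br: "\<forall>x t. count (mset (map (\<lambda>i. mu i x) [0..<N])) t = Polynomial.order (complex_of_real t) (char_poly (pencil N p L (complex_of_real x)))"
    unfolding eigen_branches_def by auto
  have Lc: "\<And>j. j \<le> p \<Longrightarrow> L j \<in> carrier_mat N N" using herm unfolding hermitian_mat_def by blast
  have Lp: "L p \<in> carrier_mat N N" by (rule Lc) simp
  have L0: "L 0 \<in> carrier_mat N N" by (rule Lc) simp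
  have podd: "odd p" using p_odd by simp
  have cnt: "\<forall>t. count (mset (map (\<lambda>i. mu i x) [0..<N])) t = Polynomial.order (complex_of_real t) (char_poly (pencil N p L (complex_of_real x)))" for x
    using br by blast
  note BC = branch_counts[OF pencil_carrier cnt]
  define Z where "Z = real_char_values N p L"
  have Zeq: "x \<in> Z \<longleftrightarrow> (\<exists>i<N. mu i x = 0)" for x
    unfolding Z_def real_char_values_def using BC(4)[of x] by simp
  obtain q where q: "\<And>z. det (pencil N p L z) = poly q z" using det_pencil_poly by metis
  obtain x1 where x1: "\<forall>i<N. mu i x1 \<noteq> 0" using asymp_side[OF Lp inv br podd, of 1 0] by auto
  have qnz: "q \<noteq> 0"
  proof
    assume "q = 0"
    hence "det (pencil N p L (complex_of_real x1)) = 0" using q by simp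
    with BC(4)[of x1] x1 show False by blast
  qed
  have finZ: "finite Z"
  proof -
    have "Z \<subseteq> complex_of_real -` {z. poly q z = 0}"
      using Zeq BC(4) q by auto
    moreover have "finite (complex_of_real -` {z. poly q z = 0})"
      by (rule finite_vimageI[OF poly_roots_finite[OF qnz]]) (auto intro: injI)
    ultimately show ?thesis by (rule finite_subset)
  qed
  have iso: "\<forall>i<N. mu i x = 0 \<longrightarrow> (\<forall>\<^sub>F y in at x. mu i y \<noteq> 0)" for x
  proof (intro allI impI)
    fix i assume i: "i < N" "mu i x = 0"
    have "\<not> x islimpt Z" using finZ by (rule islimpt_finite)
    hence "\<forall>\<^sub>F y in at x. y \<notin> Z" by (simp add: islimpt_iff_eventually)
    thus "\<forall>\<^sub>F y in at x. mu i y \<noteq> 0" by (rule eventually_mono) (use Zeq i in blast)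
  qed
  have cont: "continuous_on UNIV (mu i)" if "i < N" for i
    by (rule real_analytic_cont) (use an that in auto)
  define B where "B = Max (insert 0 (abs ` Z)) + 1"
  have Bz: "\<bar>x\<bar> < B" if "x \<in> Z" for x
  proof -
    have "\<bar>x\<bar> \<le> Max (insert 0 (abs ` Z))" using that finZ by (intro Max_ge) auto
    thus ?thesis unfolding B_def by simp
  qed
  have B0: "B > 0"
  proof -
    have "0 \<le> Max (insert 0 (abs ` Z))" using finZ by (intro Max_ge) auto
    thus ?thesis unfolding B_def by simp
  qed
  obtain b where b: "b \<ge> B" "\<forall>i<N. mu i b \<noteq> 0" "card {i. i < N \<and> mu i b > 0} = Npos_mat (L p)"
    and sumN: "Nneg_mat (L p) + Npos_mat (L p) = N"
    using asymp_side[OF Lp inv br podd, of 1 B] by auto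
  obtain a where a: "- a \<ge> B" "\<forall>i<N. mu i a \<noteq> 0" "card {i. i < N \<and> mu i a > 0} = Nneg_mat (L p)"
    using asymp_side[OF Lp inv br podd, of "-1" B] by auto
  define Sp where "Sp = {x\<in>Z. 0 < x}"
  define Sn where "Sn = {x\<in>Z. x < 0}"
  have finSp: "finite Sp" and finSn: "finite Sn" unfolding Sp_def Sn_def using finZ by auto
  have Sp_sub: "Sp \<subseteq> {0<..<b}" unfolding Sp_def using Bz b(1) by force
  have Sn_sub: "Sn \<subseteq> {a<..<0}" unfolding Sn_def using Bz a(1) by force
  have telp: "(\<Sum>x\<in>Sp. sR (mu i) x - sL (mu i) x) = sL (mu i) b - sR (mu i) 0" if i: "i < N" for i
  proof -
    have "0 < b" using b(1) B0 by simp
    moreover have "\<forall>y. 0 < y \<and> y < b \<and> mu i y = 0 \<longrightarrow> y \<in> Sp" unfolding Sp_def using Zeq i by auto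
    ultimately show ?thesis using telescope[OF cont[OF i] finSp, of 0] Sp_sub by blast
  qed
  have teln: "(\<Sum>x\<in>Sn. sR (mu i) x - sL (mu i) x) = sL (mu i) 0 - sR (mu i) a" if i: "i < N" for i
  proof -
    have "a < 0" using a(1) B0 by simp
    moreover have "\<forall>y. a < y \<and> y < 0 \<and> mu i y = 0 \<longrightarrow> y \<in> Sn" unfolding Sn_def using Zeq i by auto
    ultimately show ?thesis using telescope[OF cont[OF i] finSn, of a] Sn_sub by blast
  qed
  have P0: "pencil N p L (complex_of_real 0) = L 0" using pencil_zero[of L N p, OF L0] by simp
  have Nneg0: "Nneg_mat (L 0) = card {i. i < N \<and> mu i 0 < 0}" using BC(1)[of 0] P0 by simp
  have sump: "(\<Sum>x\<in>Sp. kappa N mu x) = int (Npos_mat (L p)) - int N + int (Nneg_mat (L 0)) + int (Zdown_pos N mu)"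
  proof -
    have "(\<Sum>x\<in>Sp. kappa N mu x) = (\<Sum>x\<in>Sp. \<Sum>i<N. sR (mu i) x - sL (mu i) x)"
      using kappa_eq[OF an iso] by simp
    also have "\<dots> = (\<Sum>i<N. \<Sum>x\<in>Sp. sR (mu i) x - sL (mu i) x)" by (rule sum.swap)
    also have "\<dots> = (\<Sum>i<N. sL (mu i) b - sR (mu i) 0)" by (rule sum.cong) (use telp in auto)
    also have "\<dots> = (\<Sum>i<N. sL (mu i) b) - (\<Sum>i<N. sR (mu i) 0)" by (simp add: sum_subtractf)
    also have "\<dots> = int (Npos_mat (L p)) - (int N - int (Nneg_mat (L 0)) - int (Zdown_pos N mu))"
      unfolding sRL_far(2)[OF an b(2)] sR0_formula(1)[OF an iso] b(3) Nneg0 Zdown_pos_def by simp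
    finally show ?thesis by simp
  qed
  have sumn: "(\<Sum>x\<in>Sn. kappa N mu x) = int N - int (Nneg_mat (L 0)) - int (Zdown_neg N mu) - int (Nneg_mat (L p))"
  proof -
    have "(\<Sum>x\<in>Sn. kappa N mu x) = (\<Sum>x\<in>Sn. \<Sum>i<N. sR (mu i) x - sL (mu i) x)"
      using kappa_eq[OF an iso] by simp
    also have "\<dots> = (\<Sum>i<N. \<Sum>x\<in>Sn. sR (mu i) x - sL (mu i) x)" by (rule sum.swap)
    also have "\<dots> = (\<Sum>i<N. sL (mu i) 0 - sR (mu i) a)" by (rule sum.cong) (use teln in auto)
    also have "\<dots> = (\<Sum>i<N. sL (mu i) 0) - (\<Sum>i<N. sR (mu i) a)" by (simp add: sum_subtractf)
    also have "\<dots> = (int N - int (Nneg_mat (L 0)) - int (Zdown_neg N mu)) - int (Nneg_mat (L p))"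
      unfolding sRL_far(1)[OF an a(2)] sR0_formula(2)[OF an iso] a(3) Nneg0 Zdown_neg_def by simp
    finally show ?thesis .
  qed
  have kd: "\<bar>kappa N mu x\<bar> \<le> int (kernel_dim (pencil N p L (complex_of_real x)))" for x
  proof -
    have "\<bar>kappa N mu x\<bar> \<le> int (card {i. i < N \<and> mu i x = 0})" by (rule kappa_abs_le[OF an iso])
    also have "card {i. i < N \<and> mu i x = 0} = Polynomial.order 0 (char_poly (pencil N p L (complex_of_real x)))"
      using BC(3)[of x] by simp
    also have "\<dots> \<le> kernel_dim (pencil N p L (complex_of_real x))"
      by (rule herm_order_le_kernel[OF pencil_carrier pencil_herm[OF herm]])
    finally show ?thesis by simp
  qed
  have Np: "int (Npos_pencil N p L) \<ge> \<bar>\<Sum>x\<in>Sp. kappa N mu x\<bar>"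
  proof -
    have "\<bar>\<Sum>x\<in>Sp. kappa N mu x\<bar> \<le> (\<Sum>x\<in>Sp. \<bar>kappa N mu x\<bar>)" by (rule sum_abs)
    also have "\<dots> \<le> (\<Sum>x\<in>Sp. int (kernel_dim (pencil N p L (complex_of_real x))))" by (rule sum_mono) (rule kd)
    also have "\<dots> = int (Npos_pencil N p L)" unfolding Npos_pencil_def Sp_def Z_def by simp
    finally show ?thesis .
  qed
  have Nn: "int (Nneg_pencil N p L) \<ge> \<bar>\<Sum>x\<in>Sn. kappa N mu x\<bar>"
  proof -
    have "\<bar>\<Sum>x\<in>Sn. kappa N mu x\<bar> \<le> (\<Sum>x\<in>Sn. \<bar>kappa N mu x\<bar>)" by (rule sum_abs)
    also have "\<dots> \<le> (\<Sum>x\<in>Sn. int (kernel_dim (pencil N p L (complex_of_real x))))" by (rule sum_mono) (rule kd)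
    also have "\<dots> = int (Nneg_pencil N p L)" unfolding Nneg_pencil_def Sn_def Z_def by simp
    finally show ?thesis .
  qed
  have Sp_eq: "{x\<in>real_char_values N p L. 0 < x} = Sp" unfolding Sp_def Z_def ..
  have Sn_eq: "{x\<in>real_char_values N p L. x < 0} = Sn" unfolding Sn_def Z_def ..
  have sN: "int (Nneg_mat (L p)) + int (Npos_mat (L p)) = int N" using sumN by linarith
  show ?thesis unfolding Sp_eq Sn_eq
  proof (intro conjI)
    show "int N - 2 * int (Nneg_mat (L 0)) - int (Zdown_pos N mu) - int (Zdown_neg N mu)
           + (\<Sum>x\<in>Sp. kappa N mu x) - (\<Sum>x\<in>Sn. kappa N mu x) = 0"
      unfolding sump sumn using sN by linarith
    show "int (Npos_pencil N p L) \<ge> \<bar>int (Nneg_mat (L 0)) + int (Zdown_pos N mu) - int (Nneg_mat (L p))\<bar>"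
      using Np unfolding sump using sN by (smt (verit))
    show "int (Nneg_pencil N p L) \<ge> \<bar>int (Nneg_mat (L 0)) + int (Zdown_neg N mu) - int (Npos_mat (L p))\<bar>"
      using Nn unfolding sumn using sN by (smt (verit))
  qed
qed


end
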